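(* Assume $\mathbf{H}_0^m$ (with $m\ge2$). For $\delta>0$ and $x\in M$ define the $n$-tuples $F_\delta(x)=R_{E(x)-i\delta}(H_0(x))P_*^\perp(x)(\nabla_xP_* )(x)P_*(x)$ and $Y_\delta(x)=-i\delta R_{E(x)-i\delta}(H_0(x))(\nabla_xP_* )(x)P_*(x)$, where $P_*^\perp(x)=1-P_*(x)$. Then $F_\delta(\cdot)\in C^m_{\rm b}(M,\mathcal L(\mathcal H_{\rm f})^{\oplus n})$ and, under alternative (ii) or (iii), there is $C<\infty$ such that for all $\delta\in(0,\delta_0]$: $\|F_\delta\|_{\mathcal L(\mathcal H,D(H_0))}\le C\delta^{-1}\eta(\delta)$, $\sup_{|\alpha|=j}\|\partial^\alpha_xF_\delta\|_{\mathcal L(\mathcal H)}\le C\delta^{-(j+1)}\eta(\delta)$ for $1\le j\le m$, and $\|Y_\delta\|_{\mathcal L(\mathcal H)}\le C\eta(\delta)$. Under alternative (i), the two bounds on $F_\delta$ hold with $\eta\equiv1$ (for $\delta$ in some interval $(0,\delta_0]$) and $\lim_{\delta\to0}\|Y_\delta\|_{\mathcal L(\mathcal H)}=0$. Under alternative (iii) the derivative bounds improve to $\sup_{|\alpha|=j}\|\partial^\alpha_xF_\delta\|_{\mathcal L(\mathcal H)}\le C\delta^{-j}\eta(\delta)$ for $1\le j\le m$.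
   Context: Let $M=\mathbb R^n$, $\mathcal H_{\rm f}$ a separable Hilbert space, $\mathcal D\subset\mathcal H_{\rm f}$ dense, and for each $x\in M$ let $H_0(x)$ be self-adjoint with domain $\mathcal D$. With $\|\psi\|_{H_0(x)}=\|H_0(x)\psi\|+\|\psi\|$, assume there are $x_0\in M$ and $C_1,C_2<\infty$, $C_1>0$, with $C_1\|\psi\|_{H_0(x_0)}\le\|\psi\|_{H_0(x)}\le C_2\|\psi\|_{H_0(x_0)}$; $\mathcal D$ carries the norm $\|\cdot\|_{H_0(x_0)}$. $\mathcal H=L^2(M)\otimes\mathcal H_{\rm f}$, $H_0=\int^\oplus H_0(x)dx$ on $L^2(M)\otimes\mathcal D$, $D(H_0)$ with graph norm. $C^k_{\rm b}(\mathbb R^n,\mathcal E)$: $C^k$ maps with bounded derivatives of order $\le k$. $R_\lambda(A)=(A-\lambda)^{-1}$. Fibered operators act on $\mathcal H$ with norm $\operatorname{ess\,sup}_x\|A(x)\|$; norms of $n$-tuples include the Euclidean norm. Assumption $\mathbf{H}_0^m$: $H_0(\cdot)\in C^m_{\rm b}(M,\mathcal L(\mathcal D,\mathcal H_{\rm f}))$; each $P_*(x)$ is an orthogonal projection with $H_0(x)P_*(x)=E(x)P_*(x)$, $P_*(\cdot)\in C^{m+1}_{\rm b}(M,\mathcal L(\mathcal H_{\rm f}))$, $E(\cdot)\in C^m_{\rm b}(M,\mathbb R)$; and one of, for $1\le j,k\le n$: (i) $\lim_{\delta\to0}\operatorname{ess\,sup}_x\|\delta R_{E(x)-i\delta}(H_0(x))(\partial_{x_j}P_*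 )(x)P_*(x)\|=0$; (ii) there are $\delta_0>0$, $\eta:[0,\delta_0]\to[0,\delta_0]$ with $\eta(\delta)\ge\delta$, and $C$ such that for $\delta\in(0,\delta_0]$, $\operatorname{ess\,sup}_x\|R_{E(x)-i\delta}(H_0(x))(\partial_{x_j}P_* )(x)P_*(x)\|\le C\delta^{-1}\eta(\delta)$; (iii) (ii) and $\operatorname{ess\,sup}_x\|\partial_{x_k}(R_{E(x)-i\delta}(H_0(x))(\partial_{x_j}P_* )(x)P_*(x))\|\le C\delta^{-1}\eta(\delta)$. *)

theory Defs
  imports "HOL-Analysis.Analysis"
begin

text \<open>HOL-Analysis only has real inner product spaces, so we introduce complex
 inner product spaces (physics convention: linear in the second argument).\<close>

class complex_inner = real_normed_vector +
  fixes scaleC :: "complex \<Rightarrow> 'a \<Rightarrow> 'a"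
  fixes cinner :: "'a \<Rightarrow> 'a \<Rightarrow> complex"
  assumes scaleC_add_right: "scaleC a (x + y) = scaleC a x + scaleC a y"
    and scaleC_add_left: "scaleC (a + b) x = scaleC a x + scaleC b x"
    and scaleC_scaleC: "scaleC a (scaleC b x) = scaleC (a * b) x"
    and scaleC_one: "scaleC 1 x = x"
    and scaleC_of_real: "scaleC (complex_of_real r) x = scaleR r x"
    and cinner_conj: "cinner x y = cnj (cinner y x)"
    and cinner_add_right: "cinner x (y + z) = cinner x y + cinner x z"
    and cinner_scaleC_right: "cinner x (scaleC a y) = a * cinner x y"
    and cinner_self: "cinner x x = complex_of_real ((norm x)\<^sup>2)"

class chilbert_space = complex_inner + complete_space

text \<open>Self-adjoint (possibly unbounded) operator A with domain D, literally A = A*.\<close>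
definition selfadjoint_on :: "'h::complex_inner set \<Rightarrow> ('h \<Rightarrow> 'h) \<Rightarrow> bool" where
  "selfadjoint_on D A \<longleftrightarrow>
     0 \<in> D \<and> (\<forall>x\<in>D. \<forall>y\<in>D. x + y \<in> D) \<and> (\<forall>a. \<forall>x\<in>D. scaleC a x \<in> D) \<and>
     closure D = UNIV \<and>
     (\<forall>x\<in>D. \<forall>y\<in>D. A (x + y) = A x + A y) \<and>
     (\<forall>a. \<forall>x\<in>D. A (scaleC a x) = scaleC a (A x)) \<and>
     (\<forall>x\<in>D. \<forall>y\<in>D. cinner (A x) y = cinner x (A y)) \<and>
     (\<forall>\<psi> \<eta>. (\<forall>\<phi>\<in>D. cinner (A \<phi>) \<psi> = cinner \<phi> \<eta>) \<longrightarrow> \<psi> \<in> D)"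

definition orth_proj :: "('h::complex_inner \<Rightarrow>\<^sub>L 'h) \<Rightarrow> bool" where
  "orth_proj P \<longleftrightarrow> (\<forall>x. P (P x) = P x) \<and> (\<forall>x y. cinner (P x) y = cinner x (P y))"

definition gnorm :: "('h::real_normed_vector \<Rightarrow> 'h) \<Rightarrow> 'h \<Rightarrow> real" where
  "gnorm A \<psi> = norm (A \<psi>) + norm \<psi>"

definition resolv :: "'h::complex_inner set \<Rightarrow> ('h \<Rightarrow> 'h) \<Rightarrow> complex \<Rightarrow> 'h \<Rightarrow> 'h" where
  "resolv D A z \<phi> = (THE \<psi>. \<psi> \<in> D \<and> A \<psi> - scaleC z \<psi> = \<phi>)"

definition partial :: "(real^'n \<Rightarrow> 'b::real_normed_vector) \<Rightarrow> 'n \<Rightarrow> real^'n \<Rightarrow> 'b" where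
  "partial f j = (\<lambda>x. frechet_derivative f (at x) (axis j 1))"

text \<open>Iterated partial derivative along a list of coordinate indices (a multi-index).\<close>
fun pderivs :: "(real^'n \<Rightarrow> 'b::real_normed_vector) \<Rightarrow> 'n list \<Rightarrow> real^'n \<Rightarrow> 'b" where
  "pderivs f [] = f"
| "pderivs f (j # js) = partial (pderivs f js) j"

fun Cb :: "nat \<Rightarrow> (real^'n \<Rightarrow> 'b::real_normed_vector) \<Rightarrow> bool" where
  "Cb 0 f \<longleftrightarrow> continuous_on UNIV f \<and> bounded (range f)"
| "Cb (Suc k) f \<longleftrightarrow> continuous_on UNIV f \<and> bounded (range f) \<and>
      (\<forall>x. f differentiable (at x)) \<and> (\<forall>j. Cb k (partial f j))"

text \<open>H0(.) in C^k_b(M, L(D,H_f)), where D carries the graph norm of H0(x0).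
 We use the Banach space isomorphism L(D,H_f) \<cong> L(H_f), T \<mapsto> T (H0(x0) - i)^{-1}:
 H0(.) is C^k_b into L(D,H_f) iff x \<mapsto> H0(x)(H0(x0) - i)^{-1} is C^k_b into L(H_f).\<close>
definition CbD :: "nat \<Rightarrow> 'h::complex_inner set \<Rightarrow> (real^'n \<Rightarrow> 'h \<Rightarrow> 'h) \<Rightarrow> real^'n \<Rightarrow> bool" where
  "CbD k D H0 x0 \<longleftrightarrow> (\<exists>G :: real^'n \<Rightarrow> ('h \<Rightarrow>\<^sub>L 'h). Cb k G \<and>
      (\<forall>x. \<forall>\<psi>\<in>D. blinfun_apply (G x) (H0 x0 \<psi> - scaleC \<i> \<psi>) = H0 x \<psi>))"

definition spec_pt :: "(real^'n \<Rightarrow> real) \<Rightarrow> real \<Rightarrow> real^'n \<Rightarrow> complex" where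
  "spec_pt E \<delta> x = complex_of_real (E x) - \<i> * complex_of_real \<delta>"

definition RB :: "'h::complex_inner set \<Rightarrow> (real^'n \<Rightarrow> 'h \<Rightarrow> 'h) \<Rightarrow> (real^'n \<Rightarrow> real) \<Rightarrow> real
                   \<Rightarrow> real^'n \<Rightarrow> ('h \<Rightarrow>\<^sub>L 'h) \<Rightarrow> ('h \<Rightarrow>\<^sub>L 'h)" where
  "RB D H0 E \<delta> x B = Blinfun (\<lambda>\<phi>. resolv D (H0 x) (spec_pt E \<delta> x) (blinfun_apply B \<phi>))"

definition RdPP where
  "RdPP D H0 E P \<delta> j x = RB D H0 E \<delta> x (partial P j x o\<^sub>L P x)"

definition Fdelta :: "'h::complex_inner set \<Rightarrow> (real^'n \<Rightarrow> 'h \<Rightarrow> 'h) \<Rightarrow> (real^'n \<Rightarrow> real)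
     \<Rightarrow> (real^'n \<Rightarrow> ('h \<Rightarrow>\<^sub>L 'h)) \<Rightarrow> real \<Rightarrow> real^'n \<Rightarrow> ('h \<Rightarrow>\<^sub>L 'h)^'n" where
  "Fdelta D H0 E P \<delta> x = (\<chi> j. RB D H0 E \<delta> x ((id_blinfun - P x) o\<^sub>L partial P j x o\<^sub>L P x))"

definition Ydelta :: "'h::complex_inner set \<Rightarrow> (real^'n \<Rightarrow> 'h \<Rightarrow> 'h) \<Rightarrow> (real^'n \<Rightarrow> real)
     \<Rightarrow> (real^'n \<Rightarrow> ('h \<Rightarrow>\<^sub>L 'h)) \<Rightarrow> real \<Rightarrow> real^'n \<Rightarrow> ('h \<Rightarrow>\<^sub>L 'h)^'n" where
  "Ydelta D H0 E P \<delta> x = (\<chi> j. Blinfun (\<lambda>\<phi>. scaleC (- \<i> * complex_of_real \<delta>)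
        (blinfun_apply (RdPP D H0 E P \<delta> j x) \<phi>)))"

text \<open>Fibre norm of an n-tuple of maps H_f \<rightarrow> D(H0(x)), graph norm of H0(x), Euclidean in the tuple:
 F(x) \<psi> has norm bounded by K \<parallel>\<psi>\<parallel>, with values in D.\<close>
definition tuple_bound_D :: "'h::complex_inner set \<Rightarrow> ('h \<Rightarrow> 'h) \<Rightarrow> ('h \<Rightarrow>\<^sub>L 'h)^'n::finite \<Rightarrow> real \<Rightarrow> bool" where
  "tuple_bound_D D A T K \<longleftrightarrow> (\<forall>\<psi> j. blinfun_apply (T $ j) \<psi> \<in> D) \<and>
     (\<forall>\<psi>. sqrt (\<Sum>j\<in>UNIV. (gnorm A (blinfun_apply (T $ j) \<psi>))\<^sup>2) \<le> K * norm \<psi>)"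

definition alt_i where
  "alt_i D H0 E P \<longleftrightarrow> (\<forall>j. \<forall>\<epsilon>>0. \<exists>d>0. \<forall>\<delta>. 0 < \<delta> \<and> \<delta> < d \<longrightarrow>
       (\<forall>x. \<delta> * norm (RdPP D H0 E P \<delta> j x) \<le> \<epsilon>))"

definition alt_ii where
  "alt_ii D H0 E P \<delta>0 (\<eta>::real \<Rightarrow> real) C \<longleftrightarrow> \<delta>0 > 0 \<and>
     (\<forall>\<delta>\<in>{0..\<delta>0}. \<delta> \<le> \<eta> \<delta> \<and> \<eta> \<delta> \<le> \<delta>0) \<and>
     (\<forall>j. \<forall>\<delta>\<in>{0<..\<delta>0}. \<forall>x. norm (RdPP D H0 E P \<delta> j x) \<le> C / \<delta> * \<eta> \<delta>)"

definition alt_iii where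
  "alt_iii D H0 E P \<delta>0 \<eta> C \<longleftrightarrow> alt_ii D H0 E P \<delta>0 \<eta> C \<and>
     (\<forall>j k. \<forall>\<delta>\<in>{0<..\<delta>0}. \<forall>x. norm (partial (RdPP D H0 E P \<delta> j) k x) \<le> C / \<delta> * \<eta> \<delta>)"

end

theory Submission
  imports Defs
begin



lemma cinner_add_left: "cinner (x + y) z = cinner x z + cinner y z"
proof -
  have "cinner (x + y) z = cnj (cinner z (x + y))" by (rule cinner_conj)
  also have "\<dots> = cnj (cinner z x) + cnj (cinner z y)" by (simp add: cinner_add_right)
  also have "\<dots> = cinner x z + cinner y z" by (simp add: cinner_conj[of x z] cinner_conj[of y z])
  finally show ?thesis .
qed

lemma cinner_scaleC_left: "cinner (scaleC a x) y = cnj a * cinner x y"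
proof -
  have "cinner (scaleC a x) y = cnj (cinner y (scaleC a x))" by (rule cinner_conj)
  also have "\<dots> = cnj a * cnj (cinner y x)" by (simp add: cinner_scaleC_right)
  also have "\<dots> = cnj a * cinner x y" by (simp add: cinner_conj[of x y])
  finally show ?thesis .
qed

lemma cinner_zero_right[simp]: "cinner x 0 = 0"
  using cinner_add_right[of x 0 0] by simp

lemma cinner_zero_left[simp]: "cinner 0 x = 0"
  using cinner_add_left[of 0 0 x] by simp

lemma cinner_minus_right: "cinner x (- y) = - cinner x y"
proof -
  have "cinner x y + cinner x (- y) = 0" using cinner_add_right[of x y "-y"] by simp
  then show ?thesis by (rule add_eq_0_iff[THEN iffD1])
qed

lemma cinner_minus_left: "cinner (- x) y = - cinner x y"
proof -
  have "cinner x y + cinner (- x) y = 0" using cinner_add_left[of x "-x" y] by simp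
  then show ?thesis by (rule add_eq_0_iff[THEN iffD1])
qed

lemma cinner_diff_right: "cinner x (y - z) = cinner x y - cinner x z"
  by (simp only: diff_conv_add_uminus cinner_add_right cinner_minus_right)

lemma cinner_diff_left: "cinner (x - y) z = cinner x z - cinner y z"
  by (simp only: diff_conv_add_uminus cinner_add_left cinner_minus_left)

lemma cinner_scaleR_right: "cinner x (scaleR r y) = complex_of_real r * cinner x y"
  using cinner_scaleC_right[of x "complex_of_real r" y] by (simp add: scaleC_of_real)

lemma cinner_scaleR_left: "cinner (scaleR r x) y = complex_of_real r * cinner x y"
  using cinner_scaleC_left[of "complex_of_real r" x y] by (simp add: scaleC_of_real)

lemma scaleC_zero[simp]: "scaleC a 0 = 0"
  using scaleC_add_right[of a 0 0] by simp

lemma scaleC_zero_left[simp]: "scaleC 0 x = 0"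
  using scaleC_of_real[of 0 x] by simp

lemma scaleC_minus: "scaleC a (- x) = - scaleC a x"
proof -
  have "scaleC a x + scaleC a (- x) = 0" using scaleC_add_right[of a x "-x"] by simp
  then show ?thesis by (rule add_eq_0_iff[THEN iffD1])
qed

lemma scaleC_diff: "scaleC a (x - y) = scaleC a x - scaleC a y"
  by (simp only: diff_conv_add_uminus scaleC_add_right scaleC_minus)

lemma scaleC_minus_left: "scaleC (- a) x = - scaleC a x"
proof -
  have "scaleC a x + scaleC (- a) x = 0" using scaleC_add_left[of a "-a" x] by simp
  then show ?thesis by (rule add_eq_0_iff[THEN iffD1])
qed

lemma scaleC_diff_left: "scaleC (a - b) x = scaleC a x - scaleC b x"
  by (simp only: diff_conv_add_uminus scaleC_add_left scaleC_minus_left)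

lemma scaleC_scaleR: "scaleC a (scaleR r x) = scaleR r (scaleC a x)"
proof -
  have "scaleC a (scaleR r x) = scaleC a (scaleC (complex_of_real r) x)" by (simp add: scaleC_of_real)
  also have "\<dots> = scaleC (complex_of_real r) (scaleC a x)" by (simp add: scaleC_scaleC mult.commute)
  finally show ?thesis by (simp add: scaleC_of_real)
qed

lemma norm_sq_cinner: "complex_of_real ((norm x)\<^sup>2) = cinner x x"
  by (simp add: cinner_self)

lemma norm_scaleC: "norm (scaleC a x) = cmod a * norm x"
proof -
  have "complex_of_real ((norm (scaleC a x))\<^sup>2) = cinner (scaleC a x) (scaleC a x)"
    by (rule cinner_self[symmetric])
  also have "\<dots> = (a * cnj a) * cinner x x"
    by (simp add: cinner_scaleC_left cinner_scaleC_right mult.commute mult.left_commute)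
  also have "\<dots> = complex_of_real ((cmod a)\<^sup>2) * complex_of_real ((norm x)\<^sup>2)"
    by (simp only: complex_norm_square cinner_self)
  also have "\<dots> = complex_of_real ((cmod a * norm x)\<^sup>2)"
    by (simp only: of_real_mult[symmetric] power_mult_distrib)
  finally have "(norm (scaleC a x))\<^sup>2 = (cmod a * norm x)\<^sup>2"
    using of_real_eq_iff by blast
  then show ?thesis by (simp add: power2_eq_iff_nonneg)
qed

lemma norm_sq_add: "(norm (x + y))\<^sup>2 = (norm x)\<^sup>2 + (norm y)\<^sup>2 + 2 * Re (cinner x y)"
proof -
  have "complex_of_real ((norm (x + y))\<^sup>2) = cinner (x + y) (x + y)"
    by (rule cinner_self[symmetric])
  also have "\<dots> = cinner x x + cinner y y + (cinner x y + cinner y x)"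
    by (simp add: cinner_add_left cinner_add_right algebra_simps)
  also have "cinner x y + cinner y x = complex_of_real (2 * Re (cinner x y))"
    by (simp add: cinner_conj[of y x] complex_add_cnj)
  finally have "complex_of_real ((norm (x + y))\<^sup>2) =
     complex_of_real ((norm x)\<^sup>2) + complex_of_real ((norm y)\<^sup>2) + complex_of_real (2 * Re (cinner x y))"
    by (simp only: cinner_self)
  then have "complex_of_real ((norm (x + y))\<^sup>2) =
     complex_of_real ((norm x)\<^sup>2 + (norm y)\<^sup>2 + 2 * Re (cinner x y))"
    by (simp only: of_real_add)
  then show ?thesis using of_real_eq_iff by blast
qed

lemma norm_sq_diff: "(norm (x - y))\<^sup>2 = (norm x)\<^sup>2 + (norm y)\<^sup>2 - 2 * Re (cinner x y)"
  using norm_sq_add[of x "-y"] by (simp add: cinner_minus_right)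

lemma Re_cinner_le: "Re (cinner x y) \<le> norm x * norm y"
proof (cases "norm x = 0 \<or> norm y = 0")
  case True then show ?thesis by auto
next
  case False
  let ?a = "norm x" and ?b = "norm y"
  have pos: "?a > 0" "?b > 0" using False by auto
  have "0 \<le> (norm (scaleR ?b x - scaleR ?a y))\<^sup>2" by simp
  also have "\<dots> = ?b^2 * ?a^2 + ?a^2 * ?b^2 - 2 * (?a * ?b * Re (cinner x y))"
    by (simp add: norm_sq_diff cinner_scaleR_left cinner_scaleR_right power_mult_distrib)
  finally have "?a * ?b * Re (cinner x y) \<le> ?a * ?b * (?a * ?b)"
    by (simp add: power2_eq_square algebra_simps)
  then show ?thesis using pos by (simp add: mult_le_cancel_left_pos)
qed




lemma cinner_cauchy_schwarz: "cmod (cinner x y) \<le> norm x * norm y"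
proof (cases "cinner x y = 0")
  case True then show ?thesis by simp
next
  case False
  define c where "c = cinner x y"
  define u where "u = cnj c / complex_of_real (cmod c)"
  have cu: "cmod u = 1" using False by (simp add: u_def norm_divide c_def)
  have "c * cnj c = complex_of_real ((cmod c)\<^sup>2)" by (rule complex_norm_square[symmetric])
  then have "u * c = complex_of_real (cmod c)"
    using False by (simp add: u_def c_def field_simps power2_eq_square mult.commute)
  then have "cinner x (scaleC u y) = complex_of_real (cmod c)"
    by (simp add: cinner_scaleC_right c_def)
  then have "cmod c = Re (cinner x (scaleC u y))" by simp
  also have "\<dots> \<le> norm x * norm (scaleC u y)" by (rule Re_cinner_le)
  also have "\<dots> = norm x * norm y" by (simp add: norm_scaleC cu)
  finally show ?thesis by (simp add: c_def)
qed

lemma bounded_linear_cinner_left: "bounded_linear (\<lambda>x. cinner x w)"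
  by (rule bounded_linear_intro[where K="norm w"])
     (auto simp: cinner_add_left cinner_scaleR_left scaleR_conv_of_real cinner_cauchy_schwarz)

lemma bounded_linear_cinner_right: "bounded_linear (\<lambda>x. cinner w x)"
  by (rule bounded_linear_intro[where K="norm w"])
     (auto simp: cinner_add_right cinner_scaleR_right scaleR_conv_of_real,
      metis cinner_cauchy_schwarz mult.commute)

lemma dense_orth_zero:
  assumes "closure D = UNIV" "\<forall>\<phi>\<in>D. cinner \<phi> w = 0"
  shows "w = 0"
proof -
  have "closed {\<phi>. cinner \<phi> w = 0}"
    by (rule closed_Collect_eq[OF linear_continuous_on[OF bounded_linear_cinner_left] continuous_on_const])
  moreover have "D \<subseteq> {\<phi>. cinner \<phi> w = 0}" using assms(2) by auto
  ultimately have "closure D \<subseteq> {\<phi>. cinner \<phi> w = 0}" by (rule closure_minimal[rotated])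
  then have "cinner w w = 0" using assms(1) by auto
  then have "norm w = 0" by (metis cinner_self of_real_eq_0_iff zero_eq_power2)
  then show ?thesis by simp
qed



context
  fixes D :: "'h::complex_inner set" and A :: "'h \<Rightarrow> 'h"
  assumes sa: "selfadjoint_on D A"
begin

lemma sa_0: "0 \<in> D" using sa unfolding selfadjoint_on_def by blast
lemma sa_add: "x \<in> D \<Longrightarrow> y \<in> D \<Longrightarrow> x + y \<in> D" using sa unfolding selfadjoint_on_def by blast
lemma sa_scaleC: "x \<in> D \<Longrightarrow> scaleC a x \<in> D" using sa unfolding selfadjoint_on_def by blast
lemma sa_dense: "closure D = UNIV" using sa unfolding selfadjoint_on_def by blast
lemma sa_A_add: "x \<in> D \<Longrightarrow> y \<in> D \<Longrightarrow> A (x + y) = A x + A y" using sa unfolding selfadjoint_on_def by blast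
lemma sa_A_scaleC: "x \<in> D \<Longrightarrow> A (scaleC a x) = scaleC a (A x)" using sa unfolding selfadjoint_on_def by blast
lemma sa_sym: "x \<in> D \<Longrightarrow> y \<in> D \<Longrightarrow> cinner (A x) y = cinner x (A y)" using sa unfolding selfadjoint_on_def by blast
lemma sa_adj: "(\<And>\<phi>. \<phi> \<in> D \<Longrightarrow> cinner (A \<phi>) \<psi> = cinner \<phi> \<eta>) \<Longrightarrow> \<psi> \<in> D"
  using sa unfolding selfadjoint_on_def by blast

lemma sa_scaleR: "x \<in> D \<Longrightarrow> scaleR r x \<in> D" using sa_scaleC[of x "complex_of_real r"] by (simp add: scaleC_of_real)
lemma sa_A_scaleR: "x \<in> D \<Longrightarrow> A (scaleR r x) = scaleR r (A x)"
  using sa_A_scaleC[of x "complex_of_real r"] by (simp add: scaleC_of_real)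
lemma sa_uminus: "x \<in> D \<Longrightarrow> - x \<in> D" using sa_scaleR[of x "-1"] by simp
lemma sa_A_uminus: "x \<in> D \<Longrightarrow> A (- x) = - A x" using sa_A_scaleR[of x "-1"] by simp
lemma sa_diff: "x \<in> D \<Longrightarrow> y \<in> D \<Longrightarrow> x - y \<in> D"
  using sa_add[of x "-y"] sa_uminus by (simp only: diff_conv_add_uminus)
lemma sa_A_diff: "x \<in> D \<Longrightarrow> y \<in> D \<Longrightarrow> A (x - y) = A x - A y"
  using sa_A_add[of x "-y"] sa_uminus sa_A_uminus by (simp only: diff_conv_add_uminus)
lemma sa_A_0: "A 0 = 0" using sa_A_scaleR[OF sa_0, of 0] by simp

lemma sa_real: "x \<in> D \<Longrightarrow> Im (cinner (A x) x) = 0"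
proof -
  assume x: "x \<in> D"
  have "cinner (A x) x = cinner x (A x)" by (rule sa_sym[OF x x])
  also have "\<dots> = cnj (cinner (A x) x)" by (rule cinner_conj)
  finally show ?thesis by (metis cnj.sel(2) neg_equal_zero)
qed

lemma sa_lower:
  assumes x: "x \<in> D"
  shows "\<bar>Im z\<bar> * norm x \<le> norm (A x - scaleC z x)"
proof -
  define a where "a = complex_of_real (Re z)"
  define b where "b = complex_of_real (Im z)"
  define u where "u = A x - scaleC a x"
  have z: "z = a + \<i> * b" by (simp add: a_def b_def complex_eq_iff)
  have e: "A x - scaleC z x = u - scaleC (\<i> * b) x"
    by (simp add: u_def z scaleC_add_left)
  have ux: "cinner u x = cinner (A x) x - cnj a * cinner x x"
    by (simp add: u_def cinner_diff_left cinner_scaleC_left)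
  have "Im (cinner u x) = 0" using sa_real[OF x]
    by (simp add: ux a_def cinner_self)
  then have "Re (cinner u (scaleC (\<i> * b) x)) = 0"
    by (simp add: cinner_scaleC_right b_def)
  then have "(norm (A x - scaleC z x))\<^sup>2 = (norm u)\<^sup>2 + (norm (scaleC (\<i> * b) x))\<^sup>2"
    by (simp add: e norm_sq_diff)
  also have "(norm (scaleC (\<i> * b) x)) = \<bar>Im z\<bar> * norm x"
    by (simp add: norm_scaleC b_def norm_mult)
  finally have "(\<bar>Im z\<bar> * norm x)\<^sup>2 \<le> (norm (A x - scaleC z x))\<^sup>2" by simp
  then show ?thesis by (rule power2_le_imp_le) simp
qed

lemma sa_closed:
  assumes xD: "\<And>n. X n \<in> D" and lx: "X \<longlonglongrightarrow> x" and ly: "(\<lambda>n. A (X n)) \<longlonglongrightarrow> y"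
  shows "x \<in> D \<and> A x = y"
proof -
  have eq: "cinner (A \<phi>) x = cinner \<phi> y" if \<phi>: "\<phi> \<in> D" for \<phi>
  proof -
    have "(\<lambda>n. cinner (A \<phi>) (X n)) \<longlonglongrightarrow> cinner (A \<phi>) x"
      by (rule bounded_linear.tendsto[OF bounded_linear_cinner_right lx])
    moreover have "(\<lambda>n. cinner \<phi> (A (X n))) \<longlonglongrightarrow> cinner \<phi> y"
      by (rule bounded_linear.tendsto[OF bounded_linear_cinner_right ly])
    moreover have "cinner (A \<phi>) (X n) = cinner \<phi> (A (X n))" for n using sa_sym[OF \<phi> xD] .
    ultimately show ?thesis using LIMSEQ_unique by auto
  qed
  then have xin: "x \<in> D" by (rule sa_adj)
  have "\<forall>\<phi>\<in>D. cinner \<phi> (A x - y) = 0"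
    using eq sa_sym[OF _ xin] by (simp add: cinner_diff_right)
  have "A x - y = 0"
    apply (rule dense_orth_zero[OF sa_dense])
    using \<open>\<forall>\<phi>\<in>D. cinner \<phi> (A x - y) = 0\<close> by blast
  then show ?thesis using xin by simp
qed

end



lemma bounded_linear_scaleC: "bounded_linear (\<lambda>x::'a::complex_inner. scaleC c x)"
  by (rule bounded_linear_intro[where K="cmod c"])
     (auto simp: scaleC_add_right scaleC_scaleR norm_scaleC mult.commute)

lemma quad_zero:
  fixes a c :: real
  assumes "\<And>t. 0 \<le> t\<^sup>2 * c - 2 * t * a" "0 \<le> c"
  shows "a = 0"
proof -
  define s where "s = 1 / (c + 1)"
  have s: "0 < s" "s * c \<le> 1" using assms(2) by (auto simp: s_def field_simps)
  have "0 \<le> (a * s)\<^sup>2 * c - 2 * (a * s) * a" by (rule assms(1))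
  also have "\<dots> = (a\<^sup>2 * s) * (s * c - 2)" by (simp add: power2_eq_square algebra_simps)
  also have "\<dots> \<le> (a\<^sup>2 * s) * (-1)" using s by (intro mult_left_mono) auto
  finally have "a\<^sup>2 * s \<le> 0" by simp
  then have "a\<^sup>2 \<le> 0" using s(1) by (simp add: mult_le_0_iff)
  then show ?thesis by simp
qed

context
  fixes D :: "'h::chilbert_space set" and A :: "'h \<Rightarrow> 'h"
  assumes sa: "selfadjoint_on D A"
begin

abbreviation "Lz z \<psi> \<equiv> A \<psi> - scaleC z \<psi>"

lemma Lz_add: "x \<in> D \<Longrightarrow> y \<in> D \<Longrightarrow> Lz z (x + y) = Lz z x + Lz z y"
  by (simp add: sa_A_add[OF sa] scaleC_add_right)
lemma Lz_diff: "x \<in> D \<Longrightarrow> y \<in> D \<Longrightarrow> Lz z (x - y) = Lz z x - Lz z y"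
  by (simp add: sa_A_diff[OF sa] scaleC_diff)
lemma Lz_scaleR: "x \<in> D \<Longrightarrow> Lz z (scaleR r x) = scaleR r (Lz z x)"
  by (simp add: sa_A_scaleR[OF sa] scaleC_scaleR scaleR_diff_right)
lemma Lz_scaleC: "x \<in> D \<Longrightarrow> Lz z (scaleC c x) = scaleC c (Lz z x)"
  by (simp add: sa_A_scaleC[OF sa] scaleC_scaleC scaleC_diff mult.commute)

lemma sa_surj:
  assumes z: "Im z \<noteq> 0"
  shows "\<exists>\<psi>\<in>D. Lz z \<psi> = \<phi>"
proof -
  define S where "S = {norm (\<phi> - Lz z \<psi>) | \<psi>. \<psi> \<in> D}"
  define d where "d = Inf S"
  have Sne: "S \<noteq> {}" using sa_0[OF sa] by (auto simp: S_def)
  have Sbdd: "bdd_below S" by (auto simp: S_def intro!: bdd_belowI[where m=0])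
  have dle: "d \<le> norm (\<phi> - Lz z \<psi>)" if "\<psi> \<in> D" for \<psi>
    unfolding d_def by (rule cInf_lower[OF _ Sbdd]) (use that in \<open>auto simp: S_def\<close>)
  have d0: "0 \<le> d" unfolding d_def by (rule cInf_greatest[OF Sne]) (auto simp: S_def)
  define e where "e n = 1 / (real n + 1)" for n
  have epos: "0 < e n" for n by (simp add: e_def)
  have ele: "e n \<le> 1" for n by (simp add: e_def)
  have "\<exists>\<psi>\<in>D. norm (\<phi> - Lz z \<psi>) < d + e n" for n
  proof -
    have "Inf S < d + e n" using epos[of n] by (simp add: d_def)
    from cInf_lessD[OF Sne this] show ?thesis by (auto simp: S_def)
  qed
  then obtain ps where psD: "\<And>n. ps n \<in> D" and psl: "\<And>n. norm (\<phi> - Lz z (ps n)) < d + e n"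
    by metis
  define v where "v n = Lz z (ps n)" for n
  have par: "(norm (v n - v m))\<^sup>2 \<le> (4 * d + 2) * (e n + e m)" for n m
  proof -
    define a where "a = \<phi> - v n"
    define b where "b = \<phi> - v m"
    define mid where "mid = scaleR (1/2) (ps n + ps m)"
    have midD: "mid \<in> D" unfolding mid_def by (intro sa_scaleR[OF sa] sa_add[OF sa] psD)
    have "Lz z mid = scaleR (1/2) (v n + v m)"
      unfolding mid_def v_def by (simp add: Lz_scaleR Lz_add psD sa_add[OF sa])
    then have ab: "a + b = scaleR 2 (\<phi> - Lz z mid)"
      by (simp add: a_def b_def algebra_simps scaleR_2)
    have "2 * d \<le> norm (a + b)" using dle[OF midD] by (simp add: ab)
    then have "4 * d\<^sup>2 \<le> (norm (a + b))\<^sup>2"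
      using d0 by (metis (no_types, opaque_lifting) four_x_squared mult_nonneg_nonneg power_mono zero_le_numeral)
    moreover have "(norm (a + b))\<^sup>2 + (norm (a - b))\<^sup>2 = 2 * (norm a)\<^sup>2 + 2 * (norm b)\<^sup>2"
      by (simp add: norm_sq_add norm_sq_diff)
    moreover have "a - b = v m - v n" by (simp add: a_def b_def)
    moreover have "norm a \<le> d + e n" "norm b \<le> d + e m"
      using psl[of n] psl[of m] by (auto simp: a_def b_def v_def)
    then have "(norm a)\<^sup>2 \<le> (d + e n)\<^sup>2" "(norm b)\<^sup>2 \<le> (d + e m)\<^sup>2"
      by (auto intro!: power_mono)
    ultimately have "(norm (v n - v m))\<^sup>2 \<le> 2 * (d + e n)\<^sup>2 + 2 * (d + e m)\<^sup>2 - 4 * d\<^sup>2"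
      by (simp add: norm_minus_commute)
    also have "\<dots> = 4 * d * (e n + e m) + 2 * (e n)\<^sup>2 + 2 * (e m)\<^sup>2"
      by (simp add: power2_eq_square algebra_simps)
    also have "\<dots> \<le> 4 * d * (e n + e m) + 2 * e n + 2 * e m"
      using epos[of n] epos[of m] ele[of n] ele[of m]
      by (intro add_mono) (auto simp: power2_eq_square mult_le_cancel_left1)
    finally show ?thesis by (simp add: algebra_simps)
  qed
  have vC: "\<forall>m\<ge>N. \<forall>n\<ge>N. norm (v m - v n) < \<epsilon>"
    if "\<epsilon> > 0" "(4 * d + 2) * (2 / (real N + 1)) < \<epsilon>\<^sup>2" for \<epsilon> N
  proof (intro allI impI)
    fix m n assume mn: "N \<le> m" "N \<le> n"
    have "e m \<le> 1 / (real N + 1)" "e n \<le> 1 / (real N + 1)"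
      using mn by (auto simp: e_def intro!: divide_left_mono)
    then have "(4 * d + 2) * (e m + e n) \<le> (4 * d + 2) * (2 / (real N + 1))"
      using d0 by (intro mult_left_mono) auto
    then have "(norm (v m - v n))\<^sup>2 < \<epsilon>\<^sup>2" using par[of m n] that by linarith
    then show "norm (v m - v n) < \<epsilon>" using that(1) by (simp add: power_less_imp_less_base)
  qed
  have exN: "\<exists>N. (4 * d + 2) * (2 / (real N + 1)) < \<epsilon>\<^sup>2" if "\<epsilon> > 0" for \<epsilon>
  proof -
    obtain N :: nat where N: "(4 * d + 2) * 2 / \<epsilon>\<^sup>2 < real N" using reals_Archimedean2 by blast
    have "(4 * d + 2) * 2 < \<epsilon>\<^sup>2 * (real N + 1)"
      using N that by (simp add: field_simps) (smt (verit) mult_pos_pos zero_less_power)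
    then show ?thesis by (intro exI[of _ N]) (simp add: field_simps)
  qed
  have vCauchy: "Cauchy v"
  proof (rule metric_CauchyI)
    fix \<epsilon> :: real assume "\<epsilon> > 0"
    then obtain N where "(4 * d + 2) * (2 / (real N + 1)) < \<epsilon>\<^sup>2" using exN by blast
    then have "\<forall>m\<ge>N. \<forall>n\<ge>N. norm (v m - v n) < \<epsilon>" using vC[OF \<open>\<epsilon> > 0\<close>] by blast
    then show "\<exists>M. \<forall>m\<ge>M. \<forall>n\<ge>M. dist (v m) (v n) < \<epsilon>" by (auto simp: dist_norm)
  qed
  have psCauchy: "Cauchy ps"
  proof (rule metric_CauchyI)
    fix \<epsilon> :: real assume ep: "\<epsilon> > 0"
    then have "\<epsilon> * \<bar>Im z\<bar> > 0" using z by simp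
    then obtain N where "(4 * d + 2) * (2 / (real N + 1)) < (\<epsilon> * \<bar>Im z\<bar>)\<^sup>2" using exN by blast
    then have N: "\<forall>m\<ge>N. \<forall>n\<ge>N. norm (v m - v n) < \<epsilon> * \<bar>Im z\<bar>" using vC[OF \<open>\<epsilon> * \<bar>Im z\<bar> > 0\<close>] by blast
    have "dist (ps m) (ps n) < \<epsilon>" if "m \<ge> N" "n \<ge> N" for m n
    proof -
      have "\<bar>Im z\<bar> * norm (ps m - ps n) \<le> norm (Lz z (ps m - ps n))"
        by (rule sa_lower[OF sa sa_diff[OF sa psD psD]])
      also have "\<dots> = norm (v m - v n)" by (simp add: v_def Lz_diff psD)
      also have "\<dots> < \<epsilon> * \<bar>Im z\<bar>" using N that by blast
      finally show ?thesis using z by (simp add: dist_norm mult.commute)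
    qed
    then show "\<exists>M. \<forall>m\<ge>M. \<forall>n\<ge>M. dist (ps m) (ps n) < \<epsilon>" by blast
  qed
  obtain \<psi>0 where l\<psi>: "ps \<longlonglongrightarrow> \<psi>0" using psCauchy Cauchy_convergent convergent_def by blast
  obtain v0 where lv: "v \<longlonglongrightarrow> v0" using vCauchy Cauchy_convergent convergent_def by blast
  have "(\<lambda>n. A (ps n)) = (\<lambda>n. v n + scaleC z (ps n))" by (simp add: v_def)
  moreover have "(\<lambda>n. v n + scaleC z (ps n)) \<longlonglongrightarrow> v0 + scaleC z \<psi>0"
    by (intro tendsto_add lv bounded_linear.tendsto[OF bounded_linear_scaleC l\<psi>])
  ultimately have "\<psi>0 \<in> D \<and> A \<psi>0 = v0 + scaleC z \<psi>0"
    using sa_closed[OF sa psD l\<psi>] by simp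
  then have \<psi>0D: "\<psi>0 \<in> D" and Lv0: "Lz z \<psi>0 = v0" by auto
  define w where "w = \<phi> - v0"
  have "(\<lambda>n. norm (\<phi> - v n)) \<longlonglongrightarrow> norm w"
    unfolding w_def by (intro tendsto_norm tendsto_diff tendsto_const lv)
  moreover have "(\<lambda>n. d + e n) \<longlonglongrightarrow> d + 0"
    unfolding e_def by (intro tendsto_add tendsto_const) (use LIMSEQ_inverse_real_of_nat in \<open>simp add: inverse_eq_divide add.commute\<close>)
  ultimately have "norm w \<le> d"
    using psl by (intro LIMSEQ_le[of "\<lambda>n. norm (\<phi> - v n)" _ "\<lambda>n. d + e n"]) (auto simp: v_def less_imp_le)
  then have wd: "norm w \<le> norm (w - scaleR t (Lz z \<psi>'))" if "\<psi>' \<in> D" for \<psi>' t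
  proof -
    have "d \<le> norm (\<phi> - Lz z (\<psi>0 + scaleR t \<psi>'))"
      by (rule dle) (intro sa_add[OF sa] \<psi>0D sa_scaleR[OF sa] that)
    also have "Lz z (\<psi>0 + scaleR t \<psi>') = v0 + scaleR t (Lz z \<psi>')"
      by (simp add: Lz_add Lz_scaleR \<psi>0D that sa_scaleR[OF sa] Lv0)
    finally show ?thesis using \<open>norm w \<le> d\<close> by (simp add: w_def algebra_simps)
  qed
  have Re0: "Re (cinner w (Lz z \<psi>')) = 0" if "\<psi>' \<in> D" for \<psi>'
  proof (rule quad_zero)
    fix t :: real
    have "(norm w)\<^sup>2 \<le> (norm (w - scaleR t (Lz z \<psi>')))\<^sup>2"
      using wd[OF that, of t] by (simp add: power_mono)
    then show "0 \<le> t\<^sup>2 * (norm (Lz z \<psi>'))\<^sup>2 - 2 * t * Re (cinner w (Lz z \<psi>'))"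
      by (simp add: norm_sq_diff cinner_scaleR_right power_mult_distrib)
  qed simp
  have orth: "cinner (Lz z \<psi>') w = 0" if "\<psi>' \<in> D" for \<psi>'
  proof -
    have "Re (cinner w (Lz z (scaleC \<i> \<psi>'))) = 0" by (rule Re0) (rule sa_scaleC[OF sa that])
    then have "Im (cinner w (Lz z \<psi>')) = 0" by (simp add: Lz_scaleC that cinner_scaleC_right)
    with Re0[OF that] have "cinner w (Lz z \<psi>') = 0" by (simp add: complex_eq_iff)
    then show ?thesis by (metis cinner_conj complex_cnj_zero)
  qed
  have adj: "cinner (A \<psi>') w = cinner \<psi>' (scaleC (cnj z) w)" if "\<psi>' \<in> D" for \<psi>'
    using orth[OF that] by (simp add: cinner_diff_left cinner_scaleC_left cinner_scaleC_right)
  then have wD: "w \<in> D" by (rule sa_adj[OF sa])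
  have "A w - scaleC (cnj z) w = 0"
  proof (rule dense_orth_zero[OF sa_dense[OF sa]], intro ballI)
    fix \<psi>' assume "\<psi>' \<in> D"
    then show "cinner \<psi>' (A w - scaleC (cnj z) w) = 0"
      using adj sa_sym[OF sa _ wD] by (simp add: cinner_diff_right)
  qed
  then have Aw: "A w = scaleC (cnj z) w" by simp
  have "Im (cinner (A w) w) = 0" by (rule sa_real[OF sa wD])
  then have "Im z * (norm w)\<^sup>2 = 0" by (simp add: Aw cinner_scaleC_left cinner_self)
  then have "w = 0" using z by simp
  then show ?thesis using \<psi>0D Lv0 by (auto simp: w_def)
qed

lemma Lz_inj:
  assumes z: "Im z \<noteq> 0" and xy: "x \<in> D" "y \<in> D" "Lz z x = Lz z y"
  shows "x = y"
proof -
  have "\<bar>Im z\<bar> * norm (x - y) \<le> norm (Lz z (x - y))" by (rule sa_lower[OF sa sa_diff[OF sa xy(1,2)]])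
  also have "\<dots> = 0" using xy by (simp add: Lz_diff)
  finally show ?thesis using z by (simp add: mult_le_0_iff)
qed

lemma resolv_spec:
  assumes z: "Im z \<noteq> 0"
  shows "resolv D A z \<phi> \<in> D \<and> Lz z (resolv D A z \<phi>) = \<phi>"
proof -
  have "\<exists>!\<psi>. \<psi> \<in> D \<and> Lz z \<psi> = \<phi>"
    using sa_surj[OF z, of \<phi>] Lz_inj[OF z] by blast
  then show ?thesis unfolding resolv_def by (rule theI')
qed

lemma resolv_Lz: "Im z \<noteq> 0 \<Longrightarrow> \<psi> \<in> D \<Longrightarrow> resolv D A z (Lz z \<psi>) = \<psi>"
  using resolv_spec Lz_inj by blast

lemma resolv_bound: "Im z \<noteq> 0 \<Longrightarrow> \<bar>Im z\<bar> * norm (resolv D A z \<phi>) \<le> norm \<phi>"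
  using sa_lower[OF sa, of "resolv D A z \<phi>" z] resolv_spec by auto

lemma resolv_add: "Im z \<noteq> 0 \<Longrightarrow> resolv D A z (x + y) = resolv D A z x + resolv D A z y"
  using resolv_Lz[of z "resolv D A z x + resolv D A z y"] resolv_spec[of z x] resolv_spec[of z y]
  by (simp add: Lz_add sa_add[OF sa])

lemma resolv_scaleC: "Im z \<noteq> 0 \<Longrightarrow> resolv D A z (scaleC c x) = scaleC c (resolv D A z x)"
  using resolv_Lz[of z "scaleC c (resolv D A z x)"] resolv_spec[of z x]
  by (simp add: Lz_scaleC sa_scaleC[OF sa])

lemma resolv_scaleR: "Im z \<noteq> 0 \<Longrightarrow> resolv D A z (scaleR r x) = scaleR r (resolv D A z x)"
  using resolv_scaleC[of z "complex_of_real r" x] by (simp add: scaleC_of_real)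

lemma bounded_linear_resolv: "Im z \<noteq> 0 \<Longrightarrow> bounded_linear (resolv D A z)"
  by (rule bounded_linear_intro[where K="1 / \<bar>Im z\<bar>"])
     (auto simp: resolv_add resolv_scaleR field_simps resolv_bound mult.commute)

end



lemma partial_has:
  "(f has_derivative f') (at x) \<Longrightarrow> partial f j x = f' (axis j 1)"
  unfolding partial_def using frechet_derivative_at by metis

lemma diff_has: "f differentiable (at x) \<Longrightarrow> (f has_derivative frechet_derivative f (at x)) (at x)"
  using frechet_derivative_works by blast

lemma partial_linear:
  assumes L: "bounded_linear L" and f: "f differentiable (at x)"
  shows "partial (\<lambda>x. L (f x)) j x = L (partial f j x)"
proof -
  have "((\<lambda>x. L (f x)) has_derivative (\<lambda>h. L (frechet_derivative f (at x) h))) (at x)"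
    by (rule bounded_linear.has_derivative[OF L diff_has[OF f]])
  then have "partial (\<lambda>x. L (f x)) j x = L (frechet_derivative f (at x) (axis j 1))" by (rule partial_has)
  then show ?thesis by (simp add: partial_def)
qed

lemma partial_add:
  assumes f: "f differentiable (at x)" and g: "g differentiable (at x)"
  shows "partial (\<lambda>x. f x + g x) j x = partial f j x + partial g j x"
proof -
  have "((\<lambda>x. f x + g x) has_derivative (\<lambda>h. frechet_derivative f (at x) h + frechet_derivative g (at x) h)) (at x)"
    by (rule has_derivative_add[OF diff_has[OF f] diff_has[OF g]])
  then have "partial (\<lambda>x. f x + g x) j x = frechet_derivative f (at x) (axis j 1) + frechet_derivative g (at x) (axis j 1)" by (rule partial_has)
  then show ?thesis by (simp add: partial_def)
qed

lemma partial_const: "partial (\<lambda>x. c) j x = 0"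
proof -
  have "partial (\<lambda>x. c) j x = (\<lambda>h. 0) (axis j 1)" by (rule partial_has[OF has_derivative_const])
  then show ?thesis by simp
qed

lemma partial_bilinear:
  assumes B: "bounded_bilinear bl" and f: "f differentiable (at x)" and g: "g differentiable (at x)"
  shows "partial (\<lambda>x. bl (f x) (g x)) j x = bl (partial f j x) (g x) + bl (f x) (partial g j x)"
proof -
  have "((\<lambda>x. bl (f x) (g x)) has_derivative
     (\<lambda>h. bl (f x) (frechet_derivative g (at x) h) + bl (frechet_derivative f (at x) h) (g x))) (at x)"
    by (rule bounded_bilinear.FDERIV[OF B diff_has[OF f] diff_has[OF g]])
  then have "partial (\<lambda>x. bl (f x) (g x)) j x = bl (f x) (frechet_derivative g (at x) (axis j 1)) + bl (frechet_derivative f (at x) (axis j 1)) (g x)" by (rule partial_has)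
  then show ?thesis by (simp add: partial_def add.commute)
qed

lemma differentiable_bilinear:
  assumes B: "bounded_bilinear bl" and f: "f differentiable (at x)" and g: "g differentiable (at x)"
  shows "(\<lambda>x. bl (f x) (g x)) differentiable (at x)"
  using bounded_bilinear.FDERIV[OF B diff_has[OF f] diff_has[OF g]] by (auto simp: differentiable_def)

lemma differentiable_linear:
  assumes L: "bounded_linear L" and f: "f differentiable (at x)"
  shows "(\<lambda>x. L (f x)) differentiable (at x)"
  using bounded_linear.has_derivative[OF L diff_has[OF f]] by (auto simp: differentiable_def)

lemma partial_sum_list:
  assumes "\<And>p. p \<in> set ps \<Longrightarrow> h p differentiable (at x)"
  shows "partial (\<lambda>x. \<Sum>p\<leftarrow>ps. h p x) j x = (\<Sum>p\<leftarrow>ps. partial (h p) j x)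
     \<and> (\<lambda>x. \<Sum>p\<leftarrow>ps. h p x) differentiable (at x)"
  using assms
proof (induction ps)
  case Nil then show ?case by (simp add: partial_const)
next
  case (Cons p ps)
  then have d: "h p differentiable (at x)" "(\<lambda>x. \<Sum>p\<leftarrow>ps. h p x) differentiable (at x)"
    and e: "partial (\<lambda>x. \<Sum>p\<leftarrow>ps. h p x) j x = (\<Sum>p\<leftarrow>ps. partial (h p) j x)" by auto
  show ?case using partial_add[OF d, of j] e d by (auto intro: differentiable_add)
qed

lemma Cb_cont: "Cb k f \<Longrightarrow> continuous_on UNIV f" by (cases k) auto
lemma Cb_bdd: "Cb k f \<Longrightarrow> bounded (range f)" by (cases k) auto

lemma Cb_mono: "Cb (Suc k) f \<Longrightarrow> Cb k f"
proof (induction k arbitrary: f)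
  case 0 then show ?case by simp
next
  case (Suc k)
  from Suc.prems have a: "continuous_on UNIV f" "bounded (range f)" "\<forall>x. f differentiable at x"
    "\<forall>j. Cb (Suc k) (partial f j)" unfolding Cb.simps(2)[of "Suc k"] by auto
  show ?case by (subst Cb.simps(2)) (use a Suc.IH in blast)
qed

lemma Cb_mono_le: "Cb k f \<Longrightarrow> l \<le> k \<Longrightarrow> Cb l f"
proof (induction k)
  case 0 then show ?case by simp
next
  case (Suc k) then show ?case by (cases "l = Suc k") (auto simp: Cb_mono)
qed



lemma bounded_normI: "(\<And>x. norm (f x) \<le> M) \<Longrightarrow> bounded (range f)"
  by (auto simp: bounded_iff)

lemma Cb_const: "Cb k (\<lambda>x::real^'n. c)"
proof (induction k arbitrary: c)
  case 0 then show ?case by (simp add: bounded_normI)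
next
  case (Suc k)
  have "partial (\<lambda>x::real^'n. c) j = (\<lambda>x. 0)" for j by (rule ext) (rule partial_const)
  then show ?case using Suc by (simp add: bounded_normI)
qed

lemma Cb_linear: "bounded_linear L \<Longrightarrow> Cb k f \<Longrightarrow> Cb k (\<lambda>x. L (f x))"
proof (induction k arbitrary: f)
  case 0 then show ?case
    by (auto intro: bounded_linear.continuous_on bounded_linear_image[of "range f" L, simplified image_image])
next
  case (Suc k)
  have "partial (\<lambda>x. L (f x)) j = (\<lambda>x. L (partial f j x))" for j
    using Suc.prems by (intro ext partial_linear) auto
  then show ?case using Suc
    by (auto intro: bounded_linear.continuous_on bounded_linear_image[of "range f" L, simplified image_image]
        differentiable_linear)
qed

lemma Cb_add: "Cb k f \<Longrightarrow> Cb k g \<Longrightarrow> Cb k (\<lambda>x. f x + g x)"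
proof (induction k arbitrary: f g)
  case 0 then show ?case
    by (auto intro!: continuous_on_add bounded_plus_comp)
next
  case (Suc k)
  have "partial (\<lambda>x. f x + g x) j = (\<lambda>x. partial f j x + partial g j x)" for j
    using Suc.prems by (intro ext partial_add) auto
  then show ?case using Suc
    by (auto intro!: continuous_on_add bounded_plus_comp differentiable_add)
qed

lemma bilinear_bounded_range:
  assumes B: "bounded_bilinear bl" and "bounded (range f)" "bounded (range g)"
  shows "bounded (range (\<lambda>x. bl (f x) (g x)))"
proof -
  obtain Mf where Mf: "\<And>x. norm (f x) \<le> Mf" using assms(2) unfolding bounded_iff by blast
  obtain Mg where Mg: "\<And>x. norm (g x) \<le> Mg" using assms(3) unfolding bounded_iff by blast
  obtain K where K: "\<And>a b. norm (bl a b) \<le> norm a * norm b * K" "K \<ge> 0"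
    using bounded_bilinear.nonneg_bounded[OF B] by blast
  have "norm (bl (f x) (g x)) \<le> Mf * Mg * K" for x
  proof -
    have "norm (f x) * norm (g x) \<le> Mf * Mg"
      using Mf[of x] Mg[of x] by (intro mult_mono) (auto intro: order_trans[OF norm_ge_zero])
    then show ?thesis using K(1)[of "f x" "g x"] K(2) by (meson mult_right_mono order_trans)
  qed
  then show ?thesis by (rule bounded_normI)
qed

lemma Cb_bilinear:
  assumes B: "bounded_bilinear bl"
  shows "Cb k f \<Longrightarrow> Cb k g \<Longrightarrow> Cb k (\<lambda>x. bl (f x) (g x))"
proof (induction k arbitrary: f g)
  {
    case 0 then show ?case
      by (auto intro!: bilinear_bounded_range[OF B] bounded_bilinear.continuous_on[OF B])
  next
    case (Suc k)
    have "partial (\<lambda>x. bl (f x) (g x)) j = (\<lambda>x. bl (partial f j x) (g x) + bl (f x) (partial g j x))" for j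
      using Suc.prems by (intro ext partial_bilinear[OF B]) auto
    moreover have "Cb k (\<lambda>x. bl (partial f j x) (g x) + bl (f x) (partial g j x))" for j
      using Suc by (intro Cb_add Suc.IH) (auto intro: Cb_mono)
    ultimately show ?case using Suc.prems
      by (auto intro!: bilinear_bounded_range[OF B] bounded_bilinear.continuous_on[OF B] differentiable_bilinear[OF B])
  }
qed

lemma Cb_sum: "finite S \<Longrightarrow> (\<And>i. i \<in> S \<Longrightarrow> Cb k (f i)) \<Longrightarrow> Cb k (\<lambda>x. \<Sum>i\<in>S. f i x)"
  by (induction S rule: finite_induct) (auto intro: Cb_add Cb_const)

lemma Cb_pderivs: "Cb k f \<Longrightarrow> length \<alpha> \<le> k \<Longrightarrow> Cb (k - length \<alpha>) (pderivs f \<alpha>)"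
proof (induction \<alpha>)
  case Nil then show ?case by simp
next
  case (Cons j js)
  then have "Cb (Suc (k - length (j # js))) (pderivs f js)" by (simp add: Suc_diff_Suc)
  then show ?case by simp
qed

lemma Cb_diff_pderivs: "Cb k f \<Longrightarrow> length \<alpha> < k \<Longrightarrow> pderivs f \<alpha> differentiable (at x)"
  using Cb_pderivs[of k f \<alpha>] by (cases "k - length \<alpha>") auto

lemma Cb_bound: "Cb k (f :: real^'n \<Rightarrow> 'b::real_normed_vector) \<Longrightarrow> \<exists>M. \<forall>\<alpha>. length \<alpha> \<le> k \<longrightarrow> (\<forall>x. norm (pderivs f \<alpha> x) \<le> M)"
proof -
  assume f: "Cb k f"
  let ?L = "{\<alpha> :: 'n list. set \<alpha> \<subseteq> UNIV \<and> length \<alpha> \<le> k}"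
  have "finite ?L" by (rule finite_lists_length_le) simp
  moreover have "\<forall>\<alpha>\<in>?L. bounded (range (pderivs f \<alpha>))"
    using Cb_pderivs[OF f] Cb_bdd by blast
  ultimately have "bounded (\<Union>\<alpha>\<in>?L. range (pderivs f \<alpha>))" by (rule bounded_UN)
  then obtain M where "\<forall>y\<in>(\<Union>\<alpha>\<in>?L. range (pderivs f \<alpha>)). norm y \<le> M" by (auto simp: bounded_iff)
  then show ?thesis by auto
qed

lemma pderivs_snoc: "pderivs f (\<alpha> @ [j]) = pderivs (partial f j) \<alpha>"
  by (induction \<alpha>) auto

definition smooth :: "nat \<Rightarrow> (real^'n \<Rightarrow> 'b::real_normed_vector) \<Rightarrow> bool" where
  "smooth k f \<longleftrightarrow> (\<forall>\<alpha> x. length \<alpha> < k \<longrightarrow> pderivs f \<alpha> differentiable (at x))"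

lemma Cb_smooth: "Cb k f \<Longrightarrow> smooth k f"
  unfolding smooth_def using Cb_diff_pderivs by blast

lemma pderivs_linear:
  assumes L: "bounded_linear L" and s: "smooth (length \<alpha>) f"
  shows "pderivs (\<lambda>x. L (f x)) \<alpha> = (\<lambda>x. L (pderivs f \<alpha> x))"
  using s
proof (induction \<alpha>)
  case Nil then show ?case by simp
next
  case (Cons j js)
  then have "smooth (length js) f" by (auto simp: smooth_def)
  with Cons.IH have "pderivs (\<lambda>x. L (f x)) js = (\<lambda>x. L (pderivs f js x))" by blast
  moreover have "pderivs f js differentiable (at x)" for x using Cons.prems by (auto simp: smooth_def)
  ultimately show ?case by (auto intro!: ext partial_linear[OF L])
qed

fun splits :: "'n list \<Rightarrow> ('n list \<times> 'n list) list" where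
  "splits [] = [([], [])]"
| "splits (j # js) = map (\<lambda>(b, c). (b, j # c)) (splits js) @ map (\<lambda>(b, c). (j # b, c)) (splits js)"

lemma splits_len: "(b, c) \<in> set (splits \<alpha>) \<Longrightarrow> length b + length c = length \<alpha>"
  by (induction \<alpha> arbitrary: b c) auto

lemma splits_ne: "splits \<alpha> \<noteq> []"
  by (induction \<alpha>) auto

lemma splits_hd: "splits \<alpha> = ([], \<alpha>) # tl (splits \<alpha>)"
proof (induction \<alpha>)
  case Nil then show ?case by simp
next
  case (Cons j js)
  then obtain r where "splits js = ([], js) # r" by metis
  then show ?case by simp
qed

lemma splits_tl: "(b, c) \<in> set (tl (splits \<alpha>)) \<Longrightarrow> b \<noteq> []"
proof (induction \<alpha> arbitrary: b c)
  case Nil then show ?case by simp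
next
  case (Cons j js)
  obtain r where r: "splits js = ([], js) # r" using splits_hd by metis
  have "tl (splits (j # js)) = map (\<lambda>(b, c). (b, j # c)) r @ map (\<lambda>(b, c). (j # b, c)) (splits js)"
    by (simp add: r)
  with Cons.prems have "(b, c) \<in> set (map (\<lambda>(b, c). (b, j # c)) r) \<or> (b, c) \<in> set (map (\<lambda>(b, c). (j # b, c)) (splits js))"
    by auto
  then show ?case
  proof
    assume "(b, c) \<in> set (map (\<lambda>(b, c). (b, j # c)) r)"
    then obtain c' where "(b, c') \<in> set r" by auto
    then show ?thesis using Cons.IH[of b c'] r by simp
  qed auto
qed

lemma splits_length: "length (splits \<alpha>) = 2 ^ length \<alpha>"
  by (induction \<alpha>) auto

lemma leibniz:
  assumes B: "bounded_bilinear bl" and f: "smooth (length \<alpha>) f" and g: "smooth (length \<alpha>) g"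
  shows "pderivs (\<lambda>x. bl (f x) (g x)) \<alpha> x = (\<Sum>(b, c)\<leftarrow>splits \<alpha>. bl (pderivs f b x) (pderivs g c x))"
  using f g
proof (induction \<alpha> arbitrary: x)
  case Nil then show ?case by simp
next
  case (Cons j js)
  then have IH: "pderivs (\<lambda>x. bl (f x) (g x)) js = (\<lambda>x. \<Sum>(b, c)\<leftarrow>splits js. bl (pderivs f b x) (pderivs g c x))"
    by (auto simp: smooth_def)
  have df: "pderivs f b differentiable (at y)" "pderivs g c differentiable (at y)"
    if "(b, c) \<in> set (splits js)" for b c y
    using splits_len[OF that] Cons.prems by (auto simp: smooth_def)
  have "pderivs (\<lambda>x. bl (f x) (g x)) (j # js) x =
     partial (\<lambda>x. \<Sum>p\<leftarrow>splits js. (case p of (b, c) \<Rightarrow> bl (pderivs f b x) (pderivs g c x))) j x"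
    by (simp add: IH case_prod_unfold)
  also have "\<dots> = (\<Sum>p\<leftarrow>splits js. partial (\<lambda>x. case p of (b, c) \<Rightarrow> bl (pderivs f b x) (pderivs g c x)) j x)"
    by (rule conjunct1[OF partial_sum_list]) (auto intro!: differentiable_bilinear[OF B] df)
  also have "\<dots> = (\<Sum>p\<leftarrow>splits js. (case p of (b, c) \<Rightarrow> bl (pderivs f b x) (pderivs g (j # c) x))
                   + (case p of (b, c) \<Rightarrow> bl (pderivs f (j # b) x) (pderivs g c x)))"
    by (intro arg_cong[where f=sum_list] map_cong refl)
       (auto simp: partial_bilinear[OF B] df add.commute)
  also have "\<dots> = (\<Sum>(b, c)\<leftarrow>splits (j # js). bl (pderivs f b x) (pderivs g c x))"
    by (simp add: sum_list_addf comp_def case_prod_unfold)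
  finally show ?case .
qed



lemma inv_diff_identity:
  fixes K Q :: "'x \<Rightarrow> ('a::real_normed_vector \<Rightarrow>\<^sub>L 'a)"
  assumes QK: "\<And>x. Q x o\<^sub>L K x = id_blinfun" and KQ: "\<And>x. K x o\<^sub>L Q x = id_blinfun"
  shows "Q y - Q x = - (Q y o\<^sub>L (K y - K x) o\<^sub>L Q x)"
proof (rule blinfun_eqI)
  fix v
  have a: "K x (Q x v) = v" using arg_cong[OF KQ[of x], of "\<lambda>F. blinfun_apply F v"] by simp
  have b: "Q y (K y w) = w" for w using arg_cong[OF QK[of y], of "\<lambda>F. blinfun_apply F w"] by simp
  show "blinfun_apply (Q y - Q x) v = blinfun_apply (- (Q y o\<^sub>L (K y - K x) o\<^sub>L Q x)) v"
    by (simp add: uminus_blinfun.rep_eq minus_blinfun.rep_eq blinfun.diff_right a b)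
qed

lemma norm_comp3:
  assumes "norm a \<le> A" "norm b \<le> B" "norm c \<le> C"
  shows "norm (a o\<^sub>L b o\<^sub>L c) \<le> A * B * C"
proof -
  have "norm (a o\<^sub>L b o\<^sub>L c) \<le> norm (a o\<^sub>L b) * norm c" by (rule norm_blinfun_compose)
  also have "\<dots> \<le> (norm a * norm b) * norm c" by (intro mult_right_mono norm_blinfun_compose) simp
  also have "\<dots> \<le> (A * B) * C"
    using assms by (intro mult_mono mult_nonneg_nonneg) (auto intro: order_trans[OF norm_ge_zero])
  finally show ?thesis .
qed

lemma inv_has_derivative:
  fixes K Q :: "real^'n \<Rightarrow> ('a::real_normed_vector \<Rightarrow>\<^sub>L 'a)"
  assumes QK: "\<And>x. Q x o\<^sub>L K x = id_blinfun" and KQ: "\<And>x. K x o\<^sub>L Q x = id_blinfun"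
    and N: "\<And>x. norm (Q x) \<le> N"
    and dK: "(K has_derivative K') (at x)"
  shows "(Q has_derivative (\<lambda>h. - (Q x o\<^sub>L K' h o\<^sub>L Q x))) (at x)"
  unfolding has_derivative_within_alt2
proof (intro conjI allI impI)
  have blK: "bounded_linear K'" using dK by (rule has_derivative_bounded_linear)
  show "bounded_linear (\<lambda>h. - (Q x o\<^sub>L K' h o\<^sub>L Q x))"
    by (intro bounded_linear_minus bounded_linear_compose[OF bounded_bilinear.bounded_linear_left[OF bounded_bilinear_blinfun_compose]]
          bounded_linear_compose[OF bounded_bilinear.bounded_linear_right[OF bounded_bilinear_blinfun_compose] blK])
  obtain B where B: "B > 0" "\<And>h. norm (K' h) \<le> norm h * B"
    using bounded_linear.pos_bounded[OF blK] by blast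
  have N0: "0 \<le> N" using N[of x] norm_ge_zero order_trans by blast
  fix e :: real assume e: "e > 0"
  define e1 where "e1 = min 1 (e / (2 * (N\<^sup>2 + 1)))"
  have e1: "e1 > 0" "e1 \<le> 1" "N\<^sup>2 * e1 \<le> e / 2"
  proof -
    have "2 * (N\<^sup>2 + 1) > 0" by (smt (verit) zero_le_power2)
    then show "e1 > 0" "e1 \<le> 1" using e by (auto simp: e1_def)
    have "N\<^sup>2 * e1 \<le> (N\<^sup>2 + 1) * (e / (2 * (N\<^sup>2 + 1)))"
      using e by (intro mult_mono) (auto simp: e1_def)
    also have "\<dots> = e / 2" using \<open>2 * (N\<^sup>2 + 1) > 0\<close> by (simp add: field_simps)
    finally show "N\<^sup>2 * e1 \<le> e / 2" .
  qed
  define C where "C = N ^ 3 * B * (B + 1)"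
  have C0: "0 \<le> C" using N0 B by (simp add: C_def)
  define d where "d = e / (2 * (C + 1))"
  have d: "d > 0" "C * d \<le> e / 2"
  proof -
    show "d > 0" using e C0 by (simp add: d_def)
    have "C * d \<le> (C + 1) * d" using \<open>d > 0\<close> by simp
    also have "\<dots> = e / 2" using C0 by (simp add: d_def field_simps)
    finally show "C * d \<le> e / 2" .
  qed
  have ev1: "eventually (\<lambda>y. norm (K y - K x - K' (y - x)) \<le> e1 * norm (y - x)) (at x)"
    using dK e1(1) unfolding has_derivative_within_alt2 by blast
  have ev2: "eventually (\<lambda>y. norm (y - x) < d) (at x)"
    using d(1) by (auto simp: eventually_at dist_norm intro!: exI[of _ d])
  show "eventually (\<lambda>y. norm (Q y - Q x - - (Q x o\<^sub>L K' (y - x) o\<^sub>L Q x)) \<le> e * norm (y - x)) (at x)"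
    using ev1 ev2
  proof eventually_elim
    case (elim y)
    define h where "h = y - x"
    define R where "R = K y - K x - K' h"
    have Kd: "K y - K x = R + K' h" by (simp add: R_def)
    have nR: "norm R \<le> e1 * norm h" using elim(1) by (simp add: R_def h_def)
    have nKd: "norm (K y - K x) \<le> (B + 1) * norm h"
    proof -
      have "norm (K y - K x) \<le> norm R + norm (K' h)" unfolding Kd by (rule norm_triangle_ineq)
      also have "\<dots> \<le> e1 * norm h + norm h * B" using nR B(2)[of h] by simp
      also have "\<dots> \<le> (B + 1) * norm h" using mult_right_mono[OF e1(2) norm_ge_zero[of h]] by (simp add: algebra_simps)
      finally show ?thesis .
    qed
    have dQ: "Q y - Q x = - (Q y o\<^sub>L (K y - K x) o\<^sub>L Q x)" by (rule inv_diff_identity[OF QK KQ])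
    have nQd: "norm (Q y - Q x) \<le> N * ((B + 1) * norm h) * N"
      unfolding dQ norm_minus_cancel by (intro norm_comp3 N nKd)
    have eq: "Q y - Q x - - (Q x o\<^sub>L K' h o\<^sub>L Q x) = - (Q y o\<^sub>L R o\<^sub>L Q x) - ((Q y - Q x) o\<^sub>L K' h o\<^sub>L Q x)"
    proof -
      have "Q y - Q x - - (Q x o\<^sub>L K' h o\<^sub>L Q x) = - (Q y o\<^sub>L (R + K' h) o\<^sub>L Q x) + (Q x o\<^sub>L K' h o\<^sub>L Q x)"
        using dQ Kd by simp
      also have "\<dots> = - (Q y o\<^sub>L R o\<^sub>L Q x) - ((Q y - Q x) o\<^sub>L K' h o\<^sub>L Q x)"
        by (rule blinfun_eqI) (simp add: uminus_blinfun.rep_eq minus_blinfun.rep_eq plus_blinfun.rep_eq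
            blinfun.add_right blinfun.diff_right)
      finally show ?thesis .
    qed
    have t1: "norm (Q y o\<^sub>L R o\<^sub>L Q x) \<le> N * (e1 * norm h) * N"
      by (intro norm_comp3 N nR)
    have t2: "norm ((Q y - Q x) o\<^sub>L K' h o\<^sub>L Q x) \<le> (N * ((B + 1) * norm h) * N) * (norm h * B) * N"
      by (intro norm_comp3 N nQd B(2))
    have "norm (Q y - Q x - - (Q x o\<^sub>L K' h o\<^sub>L Q x)) \<le>
        N * (e1 * norm h) * N + (N * ((B + 1) * norm h) * N) * (norm h * B) * N"
      unfolding eq using t1 t2 by (smt (verit) norm_minus_cancel norm_triangle_ineq4)
    also have "\<dots> = (N\<^sup>2 * e1) * norm h + (C * norm h) * norm h"
      by (simp add: C_def power2_eq_square power3_eq_cube algebra_simps)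
    also have "\<dots> \<le> (e / 2) * norm h + (e / 2) * norm h"
    proof (rule add_mono)
      show "N\<^sup>2 * e1 * norm h \<le> e / 2 * norm h" by (rule mult_right_mono[OF e1(3) norm_ge_zero])
      have "C * norm h \<le> C * d" using elim(2) C0 by (intro mult_left_mono) (auto simp: h_def)
      then have "C * norm h \<le> e / 2" using d(2) by linarith
      then show "C * norm h * norm h \<le> e / 2 * norm h" by (rule mult_right_mono) simp
    qed
    also have "\<dots> = e * norm h" by simp
    finally show ?case by (simp add: h_def)
  qed
qed


lemma inv_partial:
  fixes K Q :: "real^'n \<Rightarrow> ('a::real_normed_vector \<Rightarrow>\<^sub>L 'a)"
  assumes QK: "\<And>x. Q x o\<^sub>L K x = id_blinfun" and KQ: "\<And>x. K x o\<^sub>L Q x = id_blinfun"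
    and N: "\<And>x. norm (Q x) \<le> N" and dK: "K differentiable (at x)"
  shows "partial Q j x = - (Q x o\<^sub>L partial K j x o\<^sub>L Q x)"
    and "Q differentiable (at x)"
proof -
  have d: "(Q has_derivative (\<lambda>h. - (Q x o\<^sub>L frechet_derivative K (at x) h o\<^sub>L Q x))) (at x)"
    by (rule inv_has_derivative[OF QK KQ N diff_has[OF dK]])
  from partial_has[OF d, of j] show "partial Q j x = - (Q x o\<^sub>L partial K j x o\<^sub>L Q x)"
    by (simp add: partial_def)
  from d show "Q differentiable (at x)" by (auto simp: differentiable_def)
qed

lemma inv_continuous:
  fixes K Q :: "real^'n \<Rightarrow> ('a::real_normed_vector \<Rightarrow>\<^sub>L 'a)"
  assumes QK: "\<And>x. Q x o\<^sub>L K x = id_blinfun" and KQ: "\<And>x. K x o\<^sub>L Q x = id_blinfun"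
    and N: "\<And>x. norm (Q x) \<le> N" and cK: "continuous_on UNIV K"
  shows "continuous_on UNIV Q"
  unfolding continuous_on_eq_continuous_at[OF open_UNIV]
proof (intro ballI)
  fix x :: "real^'n"
  have "isCont K x" using cK by (simp add: continuous_on_eq_continuous_at)
  then have "(K \<longlongrightarrow> K x) (at x)" by (simp add: isCont_def)
  then have "((\<lambda>y. N * norm (K y - K x) * N) \<longlongrightarrow> N * norm (K x - K x) * N) (at x)"
    by (intro tendsto_intros)
  then have t: "((\<lambda>y. N * norm (K y - K x) * N) \<longlongrightarrow> 0) (at x)" by simp
  have "((\<lambda>y. Q y - Q x) \<longlongrightarrow> 0) (at x)"
  proof (rule Lim_null_comparison[OF _ t])
    show "\<forall>\<^sub>F y in at x. norm (Q y - Q x) \<le> N * norm (K y - K x) * N"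
    proof (intro always_eventually allI)
      fix y
      have e: "Q y - Q x = - (Q y o\<^sub>L (K y - K x) o\<^sub>L Q x)" by (rule inv_diff_identity[OF QK KQ])
      have "norm (Q y - Q x) = norm (Q y o\<^sub>L (K y - K x) o\<^sub>L Q x)"
        by (simp only: e norm_minus_cancel)
      also have "\<dots> \<le> N * norm (K y - K x) * N" by (intro norm_comp3 N order_refl)
      finally show "norm (Q y - Q x) \<le> N * norm (K y - K x) * N" .
    qed
  qed
  then have "(Q \<longlongrightarrow> Q x) (at x)" by (simp add: LIM_zero_iff)
  then show "isCont Q x" by (simp add: isCont_def)
qed

lemma Cb_inverse:
  fixes K Q :: "real^'n \<Rightarrow> ('a::real_normed_vector \<Rightarrow>\<^sub>L 'a)"
  assumes QK: "\<And>x. Q x o\<^sub>L K x = id_blinfun" and KQ: "\<And>x. K x o\<^sub>L Q x = id_blinfun"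
    and N: "\<And>x. norm (Q x) \<le> N" and K: "Cb k K"
  shows "Cb k Q"
proof -
  have "l \<le> k \<Longrightarrow> Cb l Q" for l
  proof (induction l)
    case 0
    show ?case using inv_continuous[OF QK KQ N Cb_cont[OF K]] N by (auto intro: bounded_normI)
  next
    case (Suc l)
    then have K1: "Cb (Suc l) K" using Cb_mono_le[OF K] by blast
    then have dK: "K differentiable (at x)" for x by simp
    have p: "partial Q j = (\<lambda>x. - (Q x o\<^sub>L partial K j x o\<^sub>L Q x))" for j
      by (rule ext) (rule inv_partial(1)[OF QK KQ N dK])
    have "Cb l (\<lambda>x. - (Q x o\<^sub>L partial K j x o\<^sub>L Q x))" for j
      using Suc K1
      by (intro Cb_linear[OF bounded_linear_minus[OF bounded_linear_ident]]
            Cb_bilinear[OF bounded_bilinear_blinfun_compose]) auto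
    then show ?case
      using inv_continuous[OF QK KQ N Cb_cont[OF K]] N inv_partial(2)[OF QK KQ N dK]
      by (auto simp: p intro: bounded_normI)
  qed
  then show ?thesis by simp
qed



lemma norm_vec_le_sum: "norm (x :: 'a::real_normed_vector ^'n) \<le> (\<Sum>i\<in>UNIV. norm (x $ i))"
  unfolding norm_vec_def by (rule L2_set_le_sum) simp

lemma bounded_linear_axis: "bounded_linear (axis k :: 'a::real_normed_vector \<Rightarrow> 'a^'n)"
proof (rule bounded_linear_intro[where K=1])
  show "axis k (x + y) = axis k x + axis k y" for x y :: 'a by (simp add: axis_def vec_eq_iff)
  show "axis k (r *\<^sub>R x) = r *\<^sub>R axis k x" for r and x :: 'a by (simp add: axis_def vec_eq_iff)
  show "norm (axis k x :: 'a^'n) \<le> norm x * 1" for x :: 'a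
  proof -
    have "norm (axis k x :: 'a^'n) \<le> (\<Sum>i\<in>UNIV. norm ((axis k x :: 'a^'n) $ i))" by (rule norm_vec_le_sum)
    also have "\<dots> = norm x" by (simp add: axis_def if_distrib sum.delta cong: if_cong)
    finally show ?thesis by simp
  qed
qed

lemma vec_sum_axis: "(\<chi> k. f k) = (\<Sum>k\<in>UNIV. axis k (f k))"
  by (simp add: vec_eq_iff axis_def sum_component if_distrib sum.delta cong: if_cong)

definition cS :: "complex \<Rightarrow> ('h::complex_inner \<Rightarrow>\<^sub>L 'h) \<Rightarrow> ('h \<Rightarrow>\<^sub>L 'h)" where
  "cS c X = Blinfun (\<lambda>\<phi>. scaleC c (blinfun_apply X \<phi>))"

lemma cS_apply: "blinfun_apply (cS c X) \<phi> = scaleC c (blinfun_apply X \<phi>)"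
  unfolding cS_def
  by (rule bounded_linear_Blinfun_apply[THEN fun_cong])
     (rule bounded_linear_compose[OF bounded_linear_scaleC blinfun.bounded_linear_right])

lemma cS_real: "cS (complex_of_real r) X = r *\<^sub>R X"
  by (rule blinfun_eqI) (simp add: cS_apply scaleC_of_real scaleR_blinfun.rep_eq)

lemma cS_diff: "cS (a - b) X = cS a X - cS b X"
  by (rule blinfun_eqI) (simp add: cS_apply scaleC_diff_left minus_blinfun.rep_eq)

lemma spec_pt_Im: "Im (spec_pt E \<delta> x) = - \<delta>"
  by (simp add: spec_pt_def)

lemma spec_pt_norm: "cmod (spec_pt E \<delta> x) \<le> \<bar>E x\<bar> + \<bar>\<delta>\<bar>"
proof -
  have "cmod (spec_pt E \<delta> x) \<le> cmod (complex_of_real (E x)) + cmod (\<i> * complex_of_real \<delta>)"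
    unfolding spec_pt_def by (rule norm_triangle_ineq4)
  then show ?thesis by (simp add: norm_mult)
qed

locale mset =
  fixes D :: "'h::chilbert_space set" and H0 :: "real^'n \<Rightarrow> 'h \<Rightarrow> 'h" and E :: "real^'n \<Rightarrow> real"
    and x0 :: "real^'n" and C1 :: real and G :: "real^'n \<Rightarrow> ('h \<Rightarrow>\<^sub>L 'h)"
    and P :: "real^'n \<Rightarrow> ('h \<Rightarrow>\<^sub>L 'h)" and m :: nat
  assumes sa: "\<forall>x. selfadjoint_on D (H0 x)" and C1: "C1 > 0"
    and normeq: "\<forall>x. \<forall>\<psi>\<in>D. C1 * gnorm (H0 x0) \<psi> \<le> gnorm (H0 x) \<psi>"
    and Grel: "\<forall>x. \<forall>\<psi>\<in>D. blinfun_apply (G x) (H0 x0 \<psi> - scaleC \<i> \<psi>) = H0 x \<psi>"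
    and Gcb: "Cb m G" and Pidem: "\<forall>x. P x o\<^sub>L P x = P x" and Preg: "Cb (Suc m) P" and Ereg: "Cb m E"
begin

definition "Rz \<delta> x = resolv D (H0 x) (spec_pt E \<delta> x)"
definition "Sf = resolv D (H0 x0) \<i>"
definition "Tf \<psi> = H0 x0 \<psi> - scaleC \<i> \<psi>"
definition "Qf \<delta> x \<phi> = Tf (Rz \<delta> x \<phi>)"
definition "Sb = Blinfun Sf"
definition "Qb \<delta> x = Blinfun (Qf \<delta> x)"
definition "Kb \<delta> x = G x - cS (spec_pt E \<delta> x) Sb"

lemma sax: "selfadjoint_on D (H0 x)" using sa by blast

lemma Rz_spec: "\<delta> \<noteq> 0 \<Longrightarrow> Rz \<delta> x \<phi> \<in> D \<and> H0 x (Rz \<delta> x \<phi>) - scaleC (spec_pt E \<delta> x) (Rz \<delta> x \<phi>) = \<phi>"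
  unfolding Rz_def by (rule resolv_spec[OF sax]) (simp add: spec_pt_Im)

lemma Rz_bl: "\<delta> \<noteq> 0 \<Longrightarrow> bounded_linear (Rz \<delta> x)"
  unfolding Rz_def by (rule bounded_linear_resolv[OF sax]) (simp add: spec_pt_Im)

lemma Rz_bound: "\<delta> \<noteq> 0 \<Longrightarrow> \<bar>\<delta>\<bar> * norm (Rz \<delta> x \<phi>) \<le> norm \<phi>"
  unfolding Rz_def using resolv_bound[OF sax[of x], of "spec_pt E \<delta> x" \<phi>] by (simp add: spec_pt_Im)

lemma Sf_spec: "Sf \<phi> \<in> D \<and> Tf (Sf \<phi>) = \<phi>"
  unfolding Sf_def Tf_def by (rule resolv_spec[OF sax]) simp

lemma Sf_T: "\<psi> \<in> D \<Longrightarrow> Sf (Tf \<psi>) = \<psi>"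
  unfolding Sf_def Tf_def by (rule resolv_Lz[OF sax]) simp_all

lemma Sf_bl: "bounded_linear Sf"
  unfolding Sf_def by (rule bounded_linear_resolv[OF sax]) simp

lemma Sb_apply: "blinfun_apply Sb \<phi> = Sf \<phi>"
  unfolding Sb_def using bounded_linear_Blinfun_apply[OF Sf_bl] by simp

lemma Sb_norm: "norm Sb \<le> 1"
proof (rule norm_blinfun_bound)
  fix \<phi> show "norm (blinfun_apply Sb \<phi>) \<le> 1 * norm \<phi>"
    unfolding Sb_apply Sf_def using resolv_bound[OF sax[of x0], of \<i> \<phi>] by simp
qed simp

lemma Tf_add: "x \<in> D \<Longrightarrow> y \<in> D \<Longrightarrow> Tf (x + y) = Tf x + Tf y"
  unfolding Tf_def by (simp add: sa_A_add[OF sax] scaleC_add_right)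
lemma Tf_scaleR: "x \<in> D \<Longrightarrow> Tf (r *\<^sub>R x) = r *\<^sub>R Tf x"
  unfolding Tf_def by (simp add: sa_A_scaleR[OF sax] scaleC_scaleR scaleR_diff_right)

lemma Tf_norm: "\<psi> \<in> D \<Longrightarrow> C1 * norm (Tf \<psi>) \<le> norm (H0 x \<psi>) + norm \<psi>"
proof -
  assume \<psi>: "\<psi> \<in> D"
  have "norm (Tf \<psi>) \<le> norm (H0 x0 \<psi>) + norm (scaleC \<i> \<psi>)" unfolding Tf_def by (rule norm_triangle_ineq4)
  also have "\<dots> = gnorm (H0 x0) \<psi>" by (simp add: gnorm_def norm_scaleC)
  finally have "C1 * norm (Tf \<psi>) \<le> C1 * gnorm (H0 x0) \<psi>" using C1 by simp
  also have "\<dots> \<le> gnorm (H0 x) \<psi>" using normeq \<psi> by blast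
  finally show ?thesis by (simp add: gnorm_def)
qed

lemma Qf_bound0:
  assumes d: "\<delta> \<noteq> 0"
  shows "C1 * norm (Qf \<delta> x \<phi>) \<le> norm \<phi> + (cmod (spec_pt E \<delta> x) + 1) * norm (Rz \<delta> x \<phi>)"
proof -
  let ?z = "spec_pt E \<delta> x" and ?\<psi> = "Rz \<delta> x \<phi>"
  have s: "?\<psi> \<in> D" "H0 x ?\<psi> = \<phi> + scaleC ?z ?\<psi>" using Rz_spec[OF d, of x \<phi>] by (auto simp: algebra_simps)
  have "C1 * norm (Qf \<delta> x \<phi>) \<le> norm (H0 x ?\<psi>) + norm ?\<psi>" unfolding Qf_def by (rule Tf_norm[OF s(1)])
  also have "norm (H0 x ?\<psi>) \<le> norm \<phi> + cmod ?z * norm ?\<psi>"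
    unfolding s(2) using norm_triangle_ineq[of \<phi> "scaleC ?z ?\<psi>"] by (simp add: norm_scaleC)
  finally show ?thesis by (simp add: algebra_simps)
qed

lemma Qf_bl: "\<delta> \<noteq> 0 \<Longrightarrow> bounded_linear (Qf \<delta> x)"
proof -
  assume d: "\<delta> \<noteq> 0"
  let ?z = "spec_pt E \<delta> x"
  have RD: "Rz \<delta> x \<phi> \<in> D" for \<phi> using Rz_spec[OF d] by blast
  interpret R: bounded_linear "Rz \<delta> x" by (rule Rz_bl[OF d])
  show ?thesis
  proof (rule bounded_linear_intro[where K="(1 + (cmod ?z + 1) / \<bar>\<delta>\<bar>) / C1"])
    show "Qf \<delta> x (a + b) = Qf \<delta> x a + Qf \<delta> x b" for a b
      unfolding Qf_def by (simp add: R.add Tf_add RD)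
    show "Qf \<delta> x (r *\<^sub>R a) = r *\<^sub>R Qf \<delta> x a" for r a
      unfolding Qf_def by (simp add: R.scaleR Tf_scaleR RD)
    show "norm (Qf \<delta> x a) \<le> norm a * ((1 + (cmod ?z + 1) / \<bar>\<delta>\<bar>) / C1)" for a
    proof -
      have "norm (Rz \<delta> x a) \<le> norm a / \<bar>\<delta>\<bar>" using Rz_bound[OF d, of x a] d by (simp add: field_simps)
      then have "(cmod ?z + 1) * norm (Rz \<delta> x a) \<le> (cmod ?z + 1) * (norm a / \<bar>\<delta>\<bar>)"
        by (intro mult_left_mono) auto
      with Qf_bound0[OF d, of x a] have "C1 * norm (Qf \<delta> x a) \<le> norm a + (cmod ?z + 1) * (norm a / \<bar>\<delta>\<bar>)"
        by linarith
      also have "norm a + (cmod ?z + 1) * (norm a / \<bar>\<delta>\<bar>) = C1 * (norm a * ((1 + (cmod ?z + 1) / \<bar>\<delta>\<bar>) / C1))"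
        using C1 by (simp add: field_simps)
      finally show ?thesis using C1 by (simp only: mult_le_cancel_left_pos)
    qed
  qed
qed

lemma Qb_apply: "\<delta> \<noteq> 0 \<Longrightarrow> blinfun_apply (Qb \<delta> x) \<phi> = Qf \<delta> x \<phi>"
  unfolding Qb_def using bounded_linear_Blinfun_apply[OF Qf_bl] by simp

lemma RB_eq: "\<delta> \<noteq> 0 \<Longrightarrow> RB D H0 E \<delta> x X = Sb o\<^sub>L Qb \<delta> x o\<^sub>L X"
proof -
  assume d: "\<delta> \<noteq> 0"
  have bl: "bounded_linear (\<lambda>\<phi>. Rz \<delta> x (blinfun_apply X \<phi>))"
    using bounded_linear_compose[OF Rz_bl[OF d] blinfun.bounded_linear_right, of x X] by simp
  have e: "RB D H0 E \<delta> x X = Blinfun (\<lambda>\<phi>. Rz \<delta> x (blinfun_apply X \<phi>))" by (simp add: RB_def Rz_def)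
  show ?thesis
    unfolding e
    by (rule blinfun_eqI)
       (simp add: bounded_linear_Blinfun_apply[OF bl] Sb_apply Qb_apply[OF d] Qf_def Sf_T Rz_spec[OF d])
qed

lemma Tf_Rz: "\<delta> \<noteq> 0 \<Longrightarrow> G x (Tf (Rz \<delta> x \<phi>)) = H0 x (Rz \<delta> x \<phi>)"
  using Grel Rz_spec by (auto simp: Tf_def)

lemma KQ: "\<delta> \<noteq> 0 \<Longrightarrow> Kb \<delta> x o\<^sub>L Qb \<delta> x = id_blinfun"
proof (rule blinfun_eqI)
  fix \<phi> assume d: "\<delta> \<noteq> 0"
  have "Sf (Qf \<delta> x \<phi>) = Rz \<delta> x \<phi>" unfolding Qf_def by (rule Sf_T) (use Rz_spec[OF d] in blast)
  then show "blinfun_apply (Kb \<delta> x o\<^sub>L Qb \<delta> x) \<phi> = blinfun_apply id_blinfun \<phi>"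
    using Rz_spec[OF d, of x \<phi>] Tf_Rz[OF d, of x \<phi>]
    by (simp add: Kb_def minus_blinfun.rep_eq cS_apply Sb_apply Qb_apply[OF d] Qf_def)
qed

lemma QK: "\<delta> \<noteq> 0 \<Longrightarrow> Qb \<delta> x o\<^sub>L Kb \<delta> x = id_blinfun"
proof (rule blinfun_eqI)
  fix \<phi> assume d: "\<delta> \<noteq> 0"
  let ?\<psi> = "Sf \<phi>"
  have \<psi>: "?\<psi> \<in> D" "Tf ?\<psi> = \<phi>" using Sf_spec by auto
  have "blinfun_apply (G x) (Tf ?\<psi>) = H0 x ?\<psi>" using Grel \<psi>(1) by (simp add: Tf_def)
  then have g: "blinfun_apply (G x) \<phi> = H0 x ?\<psi>" by (simp add: \<psi>(2))
  have "blinfun_apply (Kb \<delta> x) \<phi> = H0 x ?\<psi> - scaleC (spec_pt E \<delta> x) ?\<psi>"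
    using g by (simp add: Kb_def minus_blinfun.rep_eq cS_apply Sb_apply)
  moreover have "Rz \<delta> x (H0 x ?\<psi> - scaleC (spec_pt E \<delta> x) ?\<psi>) = ?\<psi>"
    unfolding Rz_def by (rule resolv_Lz[OF sax]) (simp_all add: spec_pt_Im d \<psi>)
  ultimately show "blinfun_apply (Qb \<delta> x o\<^sub>L Kb \<delta> x) \<phi> = blinfun_apply id_blinfun \<phi>"
    by (simp add: Qb_apply[OF d] Qf_def \<psi>)
qed

end


lemma blinfun_compose_assoc: "(a o\<^sub>L b) o\<^sub>L c = a o\<^sub>L (b o\<^sub>L c)"
  by (rule blinfun_eqI) simp

context mset begin

definition "Bk k x = partial P k x o\<^sub>L P x"
definition "K0 x = G x - E x *\<^sub>R Sb"
definition "Yk \<delta> k x = Qb \<delta> x o\<^sub>L Bk k x"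
definition "Emax = (SOME M. \<forall>x. \<bar>E x\<bar> \<le> M)"

lemma Emax: "\<bar>E x\<bar> \<le> Emax"
proof -
  have "bounded (range E)" using Cb_bdd[OF Ereg] .
  then obtain M where "\<forall>x. \<bar>E x\<bar> \<le> M" by (auto simp: bounded_iff)
  then have "\<forall>x. \<bar>E x\<bar> \<le> Emax" unfolding Emax_def by (rule someI)
  then show ?thesis by blast
qed

lemma Emax0: "0 \<le> Emax" using Emax[of undefined] by linarith

lemma P_cb: "Cb m P" using Preg by (rule Cb_mono)
lemma dP_cb: "Cb m (partial P k)" using Preg by simp
lemma P_diff: "P differentiable (at x)" using Preg by simp

lemma PdPP: "P x o\<^sub>L partial P k x o\<^sub>L P x = 0"
proof -
  have "(\<lambda>x. P x o\<^sub>L P x) = P" using Pidem by auto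
  then have "partial P k x = partial (\<lambda>x. P x o\<^sub>L P x) k x" by simp
  also have "\<dots> = (partial P k x o\<^sub>L P x) + (P x o\<^sub>L partial P k x)"
    by (rule partial_bilinear[OF bounded_bilinear_blinfun_compose P_diff P_diff])
  finally have e: "partial P k x w = partial P k x (P x w) + P x (partial P k x w)" for w
    by (metis blinfun_apply_blinfun_compose plus_blinfun.rep_eq)
  have pp: "P x (P x v) = P x v" for v using Pidem by (metis blinfun_apply_blinfun_compose)
  show ?thesis
  proof (rule blinfun_eqI)
    fix v
    have "partial P k x (P x v) = partial P k x (P x v) + P x (partial P k x (P x v))"
      using e[of "P x v"] pp by simp
    then show "blinfun_apply (P x o\<^sub>L partial P k x o\<^sub>L P x) v = blinfun_apply 0 v" by simp
  qed
qed

lemma Bk_eq: "(id_blinfun - P x) o\<^sub>L partial P k x o\<^sub>L P x = Bk k x"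
proof (rule blinfun_eqI)
  fix v
  have "P x (partial P k x (P x v)) = 0" using PdPP[of x k] by (metis blinfun_apply_blinfun_compose zero_blinfun.rep_eq)
  then show "blinfun_apply ((id_blinfun - P x) o\<^sub>L partial P k x o\<^sub>L P x) v = blinfun_apply (Bk k x) v"
    by (simp add: Bk_def minus_blinfun.rep_eq)
qed

lemma Fdelta_nth: "\<delta> \<noteq> 0 \<Longrightarrow> Fdelta D H0 E P \<delta> x $ k = Sb o\<^sub>L Yk \<delta> k x"
  by (simp add: Fdelta_def Bk_eq RB_eq Yk_def) (simp add: blinfun_compose_assoc)

lemma RdPP_eq: "\<delta> \<noteq> 0 \<Longrightarrow> RdPP D H0 E P \<delta> k x = Sb o\<^sub>L Yk \<delta> k x"
  by (simp add: RdPP_def RB_eq Yk_def Bk_def[symmetric]) (simp add: blinfun_compose_assoc)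

lemma Bk_cb: "Cb m (Bk k)"
  unfolding Bk_def[abs_def]
  by (rule Cb_bilinear[OF bounded_bilinear_blinfun_compose dP_cb P_cb])

lemma K0_cb: "Cb m K0"
proof -
  have "Cb m (\<lambda>x. E x *\<^sub>R Sb)" by (rule Cb_linear[OF bounded_linear_scaleR_left Ereg])
  then have "Cb m (\<lambda>x. - (E x *\<^sub>R Sb))" by (rule Cb_linear[OF bounded_linear_minus[OF bounded_linear_ident]])
  from Cb_add[OF Gcb this] show ?thesis unfolding K0_def[abs_def] by simp
qed

lemma Kb_eq: "Kb \<delta> x = K0 x + cS (\<i> * complex_of_real \<delta>) Sb"
  by (simp add: Kb_def K0_def spec_pt_def cS_diff cS_real)

lemma Kb_cb: "Cb m (Kb \<delta>)"
  unfolding Kb_eq[abs_def] by (rule Cb_add[OF K0_cb Cb_const])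

lemma Qb_norm:
  assumes d: "\<delta> > 0"
  shows "norm (Qb \<delta> x) \<le> (1 + (Emax + \<delta> + 1) / \<delta>) / C1"
proof (rule norm_blinfun_bound)
  show "0 \<le> (1 + (Emax + \<delta> + 1) / \<delta>) / C1" using C1 d Emax0 by simp
  fix \<phi>
  have z: "cmod (spec_pt E \<delta> x) + 1 \<le> Emax + \<delta> + 1" using spec_pt_norm[of E \<delta> x] Emax[of x] d by simp
  have r: "norm (Rz \<delta> x \<phi>) \<le> norm \<phi> / \<delta>" using Rz_bound[of \<delta> x \<phi>] d by (simp add: field_simps)
  have "(cmod (spec_pt E \<delta> x) + 1) * norm (Rz \<delta> x \<phi>) \<le> (Emax + \<delta> + 1) * (norm \<phi> / \<delta>)"
    using z r Emax0 d by (intro mult_mono) auto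
  then have "C1 * norm (Qf \<delta> x \<phi>) \<le> norm \<phi> + (Emax + \<delta> + 1) * (norm \<phi> / \<delta>)"
    using Qf_bound0[of \<delta> x \<phi>] d by linarith
  also have "\<dots> = C1 * ((1 + (Emax + \<delta> + 1) / \<delta>) / C1 * norm \<phi>)" using C1 d by (simp add: field_simps)
  finally have h: "C1 * norm (Qf \<delta> x \<phi>) \<le> C1 * ((1 + (Emax + \<delta> + 1) / \<delta>) / C1 * norm \<phi>)" .
  have "norm (Qf \<delta> x \<phi>) \<le> (1 + (Emax + \<delta> + 1) / \<delta>) / C1 * norm \<phi>"
    using h unfolding mult_le_cancel_left_pos[OF C1] .
  then show "norm (blinfun_apply (Qb \<delta> x) \<phi>) \<le> (1 + (Emax + \<delta> + 1) / \<delta>) / C1 * norm \<phi>"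
    using d by (simp add: Qb_apply)
qed

lemma Qb_cb: "\<delta> > 0 \<Longrightarrow> Cb m (Qb \<delta>)"
  by (rule Cb_inverse[OF QK KQ Qb_norm Kb_cb]) auto

lemma Yk_cb: "\<delta> > 0 \<Longrightarrow> Cb m (Yk \<delta> k)"
  unfolding Yk_def[abs_def] by (rule Cb_bilinear[OF bounded_bilinear_blinfun_compose Qb_cb Bk_cb])

lemma F_cb: "\<delta> > 0 \<Longrightarrow> Cb m (Fdelta D H0 E P \<delta>)"
proof -
  assume d: "\<delta> > 0"
  have "Fdelta D H0 E P \<delta> = (\<lambda>x. \<Sum>k\<in>UNIV. axis k (Sb o\<^sub>L Yk \<delta> k x))"
  proof (rule ext)
    fix x
    have "Fdelta D H0 E P \<delta> x = (\<chi> k. Sb o\<^sub>L Yk \<delta> k x)" using Fdelta_nth d by (simp add: vec_eq_iff)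
    then show "Fdelta D H0 E P \<delta> x = (\<Sum>k\<in>UNIV. axis k (Sb o\<^sub>L Yk \<delta> k x))" by (simp only: vec_sum_axis)
  qed
  moreover have "Cb m (\<lambda>x. \<Sum>k\<in>UNIV. axis k (Sb o\<^sub>L Yk \<delta> k x))"
    by (intro Cb_sum Cb_linear[OF bounded_linear_axis]
         Cb_linear[OF bounded_bilinear.bounded_linear_right[OF bounded_bilinear_blinfun_compose]] Yk_cb d) simp
  ultimately show ?thesis by simp
qed

end


lemma norm_sum_list_le: "(\<And>p. p \<in> set L \<Longrightarrow> norm (f p) \<le> c) \<Longrightarrow> norm (\<Sum>p\<leftarrow>L. f p) \<le> real (length L) * c"
proof (induction L)
  case Nil then show ?case by simp
next
  case (Cons a L)
  have "norm (\<Sum>p\<leftarrow>a # L. f p) \<le> norm (f a) + norm (\<Sum>p\<leftarrow>L. f p)" by (simp add: norm_triangle_ineq)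
  also have "\<dots> \<le> c + real (length L) * c" using Cons by (intro add_mono) auto
  finally show ?case by (simp add: algebra_simps)
qed

lemma smooth_mono: "smooth k f \<Longrightarrow> l \<le> k \<Longrightarrow> smooth l f"
  unfolding smooth_def by auto

lemma pderivs_add_const:
  assumes "\<And>x. f differentiable (at x)" "b \<noteq> []"
  shows "pderivs (\<lambda>x. f x + c) b = pderivs f b"
proof -
  obtain b' j where b: "b = b' @ [j]" using assms(2) by (metis rev_exhaust)
  have "partial (\<lambda>x. f x + c) j = partial f j"
    by (rule ext) (simp add: partial_add[OF assms(1)] partial_const)
  then show ?thesis by (simp add: b pderivs_snoc)
qed

lemma blinfun_compose_id_left: "id_blinfun o\<^sub>L a = a" by (rule blinfun_eqI) simp
lemma blinfun_compose_id_right: "a o\<^sub>L id_blinfun = a" by (rule blinfun_eqI) simp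

context mset begin

lemma Dtrick:
  assumes d: "\<delta> > 0"
  shows "C1 * norm (Qb \<delta> x o\<^sub>L X) \<le> norm X + (Emax + \<delta> + 1) * norm (Sb o\<^sub>L (Qb \<delta> x o\<^sub>L X))"
proof -
  let ?b = "(norm X + (Emax + \<delta> + 1) * norm (Sb o\<^sub>L (Qb \<delta> x o\<^sub>L X))) / C1"
  have "norm (Qb \<delta> x o\<^sub>L X) \<le> ?b"
  proof (rule norm_blinfun_bound)
    show "0 \<le> ?b" using C1 d Emax0 by simp
    fix \<phi>
    let ?w = "blinfun_apply X \<phi>"
    have z: "cmod (spec_pt E \<delta> x) + 1 \<le> Emax + \<delta> + 1" using spec_pt_norm[of E \<delta> x] Emax[of x] d by simp
    have RS: "Rz \<delta> x ?w = blinfun_apply (Sb o\<^sub>L (Qb \<delta> x o\<^sub>L X)) \<phi>"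
      using Sf_T[of "Rz \<delta> x ?w"] Rz_spec[of \<delta> x ?w] d by (simp add: Sb_apply Qb_apply Qf_def)
    have "C1 * norm (Qf \<delta> x ?w) \<le> norm ?w + (cmod (spec_pt E \<delta> x) + 1) * norm (Rz \<delta> x ?w)"
      using Qf_bound0 d by simp
    also have "\<dots> \<le> norm X * norm \<phi> + (Emax + \<delta> + 1) * (norm (Sb o\<^sub>L (Qb \<delta> x o\<^sub>L X)) * norm \<phi>)"
      unfolding RS using z Emax0 d by (intro add_mono mult_mono norm_blinfun) auto
    also have "\<dots> = C1 * (?b * norm \<phi>)" using C1 by (simp add: field_simps)
    finally have "C1 * norm (Qf \<delta> x ?w) \<le> C1 * (?b * norm \<phi>)" .
    then show "norm (blinfun_apply (Qb \<delta> x o\<^sub>L X) \<phi>) \<le> ?b * norm \<phi>"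
      unfolding mult_le_cancel_left_pos[OF C1] using d by (simp add: Qb_apply)
  qed
  then show ?thesis using C1 by (simp add: field_simps)
qed

lemma MK_ex: "\<exists>M\<ge>0. \<forall>b x. length b \<le> m \<longrightarrow> norm (pderivs K0 b x) \<le> M"
proof -
  obtain M where "\<forall>b. length b \<le> m \<longrightarrow> (\<forall>x. norm (pderivs K0 b x) \<le> M)" using Cb_bound[OF K0_cb] by blast
  moreover have "0 \<le> M" using calculation[rule_format, of "[]" undefined] by (simp add: order_trans[OF norm_ge_zero])
  ultimately show ?thesis by blast
qed

lemma MB_ex: "\<exists>M\<ge>0. \<forall>k b x. length b \<le> m \<longrightarrow> norm (pderivs (Bk k) b x) \<le> M"
proof -
  have "\<forall>k. \<exists>M. \<forall>b. length b \<le> m \<longrightarrow> (\<forall>x. norm (pderivs (Bk k) b x) \<le> M)"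
    using Cb_bound[OF Bk_cb] by blast
  then obtain Mf where Mf: "\<And>k b x. length b \<le> m \<Longrightarrow> norm (pderivs (Bk k) b x) \<le> Mf k" by metis
  define M where "M = (\<Sum>k\<in>UNIV. \<bar>Mf k\<bar>)"
  have "Mf k \<le> M" for k
  proof -
    have "\<bar>Mf k\<bar> \<le> M" unfolding M_def by (rule member_le_sum) auto
    then show ?thesis by simp
  qed
  then have "\<forall>k b x. length b \<le> m \<longrightarrow> norm (pderivs (Bk k) b x) \<le> M"
    using Mf order_trans by blast
  moreover have "M \<ge> 0" unfolding M_def by (rule sum_nonneg) simp
  ultimately show ?thesis by blast
qed

definition "MK = (SOME M. M \<ge> 0 \<and> (\<forall>b x. length b \<le> m \<longrightarrow> norm (pderivs K0 b x) \<le> M))"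
definition "MB = (SOME M. M \<ge> 0 \<and> (\<forall>k b x. length b \<le> m \<longrightarrow> norm (pderivs (Bk k) b x) \<le> M))"

lemma MK: "MK \<ge> 0" "length b \<le> m \<Longrightarrow> norm (pderivs K0 b x) \<le> MK"
  using someI_ex[OF MK_ex] unfolding MK_def[symmetric] by auto
lemma MB: "MB \<ge> 0" "length b \<le> m \<Longrightarrow> norm (pderivs (Bk k) b x) \<le> MB"
  using someI_ex[OF MB_ex] unfolding MB_def[symmetric] by auto

lemma KY: "\<delta> > 0 \<Longrightarrow> Kb \<delta> x o\<^sub>L Yk \<delta> k x = Bk k x"
  by (simp add: Yk_def blinfun_compose_assoc[symmetric] KQ blinfun_compose_id_left)

lemma Kb_pderivs: "b \<noteq> [] \<Longrightarrow> length b \<le> m \<Longrightarrow> pderivs (Kb \<delta>) b = pderivs K0 b"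
proof -
  assume b: "b \<noteq> []" "length b \<le> m"
  then have "m \<noteq> 0" by (cases b) auto
  then obtain m' where "m = Suc m'" by (cases m) auto
  then have dK: "K0 differentiable (at x)" for x using K0_cb by simp
  show ?thesis unfolding Kb_eq[abs_def] by (rule pderivs_add_const[OF dK b(1)])
qed

lemma recursion:
  assumes d: "\<delta> > 0" and len: "length \<alpha> \<le> m"
  shows "pderivs (Yk \<delta> k) \<alpha> x = Qb \<delta> x o\<^sub>L (pderivs (Bk k) \<alpha> x -
            (\<Sum>(b, c)\<leftarrow>tl (splits \<alpha>). pderivs K0 b x o\<^sub>L pderivs (Yk \<delta> k) c x))"
proof -
  have sK: "smooth (length \<alpha>) (Kb \<delta>)" by (rule smooth_mono[OF Cb_smooth[OF Kb_cb] len])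
  have sY: "smooth (length \<alpha>) (Yk \<delta> k)" by (rule smooth_mono[OF Cb_smooth[OF Yk_cb[OF d]] len])
  have "(\<lambda>x. Kb \<delta> x o\<^sub>L Yk \<delta> k x) = Bk k" using KY[OF d] by auto
  then have "pderivs (Bk k) \<alpha> x = pderivs (\<lambda>x. Kb \<delta> x o\<^sub>L Yk \<delta> k x) \<alpha> x" by simp
  also have "\<dots> = (\<Sum>(b, c)\<leftarrow>splits \<alpha>. pderivs (Kb \<delta>) b x o\<^sub>L pderivs (Yk \<delta> k) c x)"
    by (rule leibniz[OF bounded_bilinear_blinfun_compose sK sY])
  also have "\<dots> = (Kb \<delta> x o\<^sub>L pderivs (Yk \<delta> k) \<alpha> x) +
        (\<Sum>(b, c)\<leftarrow>tl (splits \<alpha>). pderivs (Kb \<delta>) b x o\<^sub>L pderivs (Yk \<delta> k) c x)"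
    by (subst splits_hd) simp
  also have "(\<Sum>(b, c)\<leftarrow>tl (splits \<alpha>). pderivs (Kb \<delta>) b x o\<^sub>L pderivs (Yk \<delta> k) c x) =
             (\<Sum>(b, c)\<leftarrow>tl (splits \<alpha>). pderivs K0 b x o\<^sub>L pderivs (Yk \<delta> k) c x)"
  proof (intro arg_cong[where f=sum_list] map_cong refl, clarify)
    fix b c assume bc: "(b, c) \<in> set (tl (splits \<alpha>))"
    have "b \<noteq> []" by (rule splits_tl[OF bc])
    moreover have "length b \<le> m"
      using splits_len[of b c \<alpha>] bc len by (metis (no_types) le_add1 list.set_sel(2) order_trans splits_ne)
    ultimately show "pderivs (Kb \<delta>) b x o\<^sub>L pderivs (Yk \<delta> k) c x = pderivs K0 b x o\<^sub>L pderivs (Yk \<delta> k) c x"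
      by (simp add: Kb_pderivs)
  qed
  finally have e: "Kb \<delta> x o\<^sub>L pderivs (Yk \<delta> k) \<alpha> x = pderivs (Bk k) \<alpha> x -
        (\<Sum>(b, c)\<leftarrow>tl (splits \<alpha>). pderivs K0 b x o\<^sub>L pderivs (Yk \<delta> k) c x)"
    by (simp add: algebra_simps)
  have "pderivs (Yk \<delta> k) \<alpha> x = Qb \<delta> x o\<^sub>L (Kb \<delta> x o\<^sub>L pderivs (Yk \<delta> k) \<alpha> x)"
    using QK[of \<delta> x] d by (simp add: blinfun_compose_assoc[symmetric] blinfun_compose_id_left)
  then show ?thesis by (simp add: e)
qed

end


lemma pow_le_maxpow:
  fixes \<delta> \<delta>0 :: real
  assumes "0 < \<delta>" "\<delta> \<le> \<delta>0" "a \<le> t"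
  shows "\<delta> ^ a \<le> (max 1 \<delta>0) ^ t"
proof -
  have "\<delta> ^ a \<le> (max 1 \<delta>0) ^ a" using assms by (intro power_mono) auto
  also have "\<dots> \<le> (max 1 \<delta>0) ^ t" using assms(3) by (intro power_increasing) auto
  finally show ?thesis .
qed

lemma AW1:
  fixes \<delta> \<delta>0 e :: real
  assumes d: "0 < \<delta>" "\<delta> \<le> \<delta>0" and sr: "s \<le> r" "r \<le> s + t" and e: "0 \<le> e"
  shows "e / \<delta> ^ s \<le> (max 1 \<delta>0) ^ t * (e / \<delta> ^ r)"
proof -
  have r: "\<delta> ^ r = \<delta> ^ s * \<delta> ^ (r - s)" using sr by (simp add: power_add[symmetric])
  have "\<delta> ^ (r - s) \<le> (max 1 \<delta>0) ^ t" using d sr by (intro pow_le_maxpow) auto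
  then have "e * \<delta> ^ (r - s) \<le> e * (max 1 \<delta>0) ^ t" using e by (rule mult_left_mono)
  then have "e * \<delta> ^ (r - s) / \<delta> ^ r \<le> e * (max 1 \<delta>0) ^ t / \<delta> ^ r"
    using d by (intro divide_right_mono) auto
  moreover have "e * \<delta> ^ (r - s) / \<delta> ^ r = e / \<delta> ^ s" using d by (simp add: r)
  ultimately show ?thesis by (simp add: mult.commute)
qed

lemma AW2:
  fixes \<delta> \<delta>0 e :: real
  assumes d: "0 < \<delta>" "\<delta> \<le> \<delta>0" "\<delta> \<le> e" and sr: "s + 1 \<le> r" "r \<le> s + 1 + t"
  shows "1 / \<delta> ^ s \<le> (max 1 \<delta>0) ^ t * (e / \<delta> ^ r)"
proof -
  have rr: "r = s + Suc (r - s - 1)" using sr by arith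
  have r: "\<delta> ^ r = \<delta> ^ s * (\<delta> * \<delta> ^ (r - s - 1))"
    by (subst rr) (simp only: power_add power_Suc)
  have "\<delta> ^ (r - s - 1) \<le> (max 1 \<delta>0) ^ t" using d sr by (intro pow_le_maxpow) auto
  then have "\<delta> * \<delta> ^ (r - s - 1) \<le> e * (max 1 \<delta>0) ^ t" using d by (intro mult_mono) auto
  then have "\<delta> * \<delta> ^ (r - s - 1) / \<delta> ^ r \<le> e * (max 1 \<delta>0) ^ t / \<delta> ^ r"
    using d by (intro divide_right_mono) auto
  moreover have "\<delta> * \<delta> ^ (r - s - 1) / \<delta> ^ r = 1 / \<delta> ^ s" using d unfolding r by simp
  ultimately show ?thesis by (simp add: mult.commute)
qed


context mset begin

lemma RB_apply: "\<delta> \<noteq> 0 \<Longrightarrow> blinfun_apply (RB D H0 E \<delta> x X) \<psi> = Rz \<delta> x (blinfun_apply X \<psi>)"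
  using Sf_T[of "Rz \<delta> x (blinfun_apply X \<psi>)"] Rz_spec[of \<delta> x "blinfun_apply X \<psi>"]
  by (simp add: RB_eq Sb_apply Qb_apply Qf_def)

lemma RdPP_triv: "\<delta> > 0 \<Longrightarrow> norm (RdPP D H0 E P \<delta> k x) \<le> MB / \<delta>"
proof (rule norm_blinfun_bound)
  assume d: "\<delta> > 0"
  show "0 \<le> MB / \<delta>" using MB(1) d by simp
  fix \<psi>
  have "norm (blinfun_apply (RdPP D H0 E P \<delta> k x) \<psi>) = norm (Rz \<delta> x (blinfun_apply (Bk k x) \<psi>))"
    using d by (simp add: RdPP_def RB_apply Bk_def)
  also have "\<dots> \<le> norm (blinfun_apply (Bk k x) \<psi>) / \<delta>"
    using Rz_bound[of \<delta> x "blinfun_apply (Bk k x) \<psi>"] d by (simp add: field_simps)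
  also have "\<dots> \<le> (MB * norm \<psi>) / \<delta>"
    using d MB(2)[of "[]" k x] by (intro divide_right_mono order_trans[OF norm_blinfun] mult_right_mono) auto
  finally show "norm (blinfun_apply (RdPP D H0 E P \<delta> k x) \<psi>) \<le> MB / \<delta> * norm \<psi>" by simp
qed

definition "qc \<delta>0 = (2 * \<delta>0 + Emax + 1) / C1"

lemma Qb_le: "0 < \<delta> \<Longrightarrow> \<delta> \<le> \<delta>0 \<Longrightarrow> norm (Qb \<delta> x) \<le> qc \<delta>0 / \<delta>"
proof -
  assume d: "0 < \<delta>" "\<delta> \<le> \<delta>0"
  have "norm (Qb \<delta> x) \<le> (1 + (Emax + \<delta> + 1) / \<delta>) / C1" by (rule Qb_norm[OF d(1)])
  also have "\<dots> = (\<delta> + Emax + \<delta> + 1) / (C1 * \<delta>)" using d C1 by (simp add: field_simps)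
  also have "\<dots> \<le> (2 * \<delta>0 + Emax + 1) / (C1 * \<delta>)" using d C1 by (intro divide_right_mono) auto
  also have "\<dots> = qc \<delta>0 / \<delta>" by (simp add: qc_def)
  finally show ?thesis .
qed

lemma qc0: "0 < \<delta> \<Longrightarrow> \<delta> \<le> \<delta>0 \<Longrightarrow> 0 \<le> qc \<delta>0"
  unfolding qc_def using C1 Emax0 by simp

lemma norm_rec:
  assumes d: "\<delta> > 0" and len: "length \<alpha> = j" "j \<le> m" and A: "0 \<le> A"
    and hyp: "\<And>b c. (b, c) \<in> set (tl (splits \<alpha>)) \<Longrightarrow> norm (pderivs (Yk \<delta> k) c x) \<le> A"
  shows "norm (pderivs (Yk \<delta> k) \<alpha> x) \<le> norm (Qb \<delta> x) * (MB + 2 ^ j * MK * A)"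
proof -
  let ?S = "\<Sum>(b, c)\<leftarrow>tl (splits \<alpha>). pderivs K0 b x o\<^sub>L pderivs (Yk \<delta> k) c x"
  have "norm ?S \<le> real (length (tl (splits \<alpha>))) * (MK * A)"
  proof (rule norm_sum_list_le, clarify)
    fix b c assume bc: "(b, c) \<in> set (tl (splits \<alpha>))"
    have "length b \<le> m"
      using splits_len[of b c \<alpha>] bc len by (metis (no_types) le_add1 list.set_sel(2) order_trans splits_ne)
    then show "norm (pderivs K0 b x o\<^sub>L pderivs (Yk \<delta> k) c x) \<le> MK * A"
      using MK hyp[OF bc] by (intro order_trans[OF norm_blinfun_compose] mult_mono) auto
  qed
  also have "\<dots> \<le> 2 ^ j * (MK * A)"
    using MK(1) A len by (intro mult_right_mono) (auto simp: splits_length)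
  finally have S: "norm ?S \<le> 2 ^ j * MK * A" by simp
  have "norm (pderivs (Yk \<delta> k) \<alpha> x) \<le> norm (Qb \<delta> x) * norm (pderivs (Bk k) \<alpha> x - ?S)"
    unfolding recursion[OF d len(1)[THEN eq_refl, THEN order_trans, OF len(2)]] by (rule norm_blinfun_compose)
  also have "\<dots> \<le> norm (Qb \<delta> x) * (MB + 2 ^ j * MK * A)"
    using MB(2)[of \<alpha> k x] len S by (intro mult_left_mono order_trans[OF norm_triangle_ineq4] add_mono) auto
  finally show ?thesis .
qed

lemma alt_ii_facts:
  assumes A: "alt_ii D H0 E P \<delta>0 \<eta> C" and d: "0 < \<delta>" "\<delta> \<le> \<delta>0"
  shows "\<delta> \<le> \<eta> \<delta>" "norm (RdPP D H0 E P \<delta> k x) \<le> \<bar>C\<bar> * (\<eta> \<delta> / \<delta>)" "0 < \<delta>0"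
proof -
  show e: "\<delta> \<le> \<eta> \<delta>" using A d unfolding alt_ii_def by auto
  have "norm (RdPP D H0 E P \<delta> k x) \<le> C / \<delta> * \<eta> \<delta>" using A d unfolding alt_ii_def by auto
  also have "\<dots> \<le> \<bar>C\<bar> * (\<eta> \<delta> / \<delta>)" using d e by (simp add: field_simps mult_right_mono)
  finally show "norm (RdPP D H0 E P \<delta> k x) \<le> \<bar>C\<bar> * (\<eta> \<delta> / \<delta>)" .
  show "0 < \<delta>0" using d by simp
qed

lemma Y0_bound:
  assumes d: "0 < \<delta>" "\<delta> \<le> \<delta>0"
  shows "C1 * norm (Yk \<delta> k x) \<le> MB + (Emax + \<delta>0 + 1) * norm (RdPP D H0 E P \<delta> k x)"
proof -
  have "C1 * norm (Yk \<delta> k x) \<le> norm (Bk k x) + (Emax + \<delta> + 1) * norm (Sb o\<^sub>L (Qb \<delta> x o\<^sub>L Bk k x))"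
    unfolding Yk_def by (rule Dtrick[OF d(1)])
  also have "\<dots> \<le> MB + (Emax + \<delta>0 + 1) * norm (RdPP D H0 E P \<delta> k x)"
  proof -
    have e: "Sb o\<^sub>L (Qb \<delta> x o\<^sub>L Bk k x) = RdPP D H0 E P \<delta> k x" using d by (simp add: RdPP_eq Yk_def)
    show ?thesis unfolding e using MB(2)[of "[]" k x] d Emax0
      by (intro add_mono mult_right_mono) auto
  qed
  finally show ?thesis .
qed

lemma ii_Y:
  assumes A: "alt_ii D H0 E P \<delta>0 \<eta> C"
  shows "j \<le> m \<Longrightarrow> \<exists>c. \<forall>\<delta>\<in>{0<..\<delta>0}. \<forall>k \<alpha> x. length \<alpha> = j \<longrightarrow>
            norm (pderivs (Yk \<delta> k) \<alpha> x) \<le> c * (\<eta> \<delta> / \<delta> ^ (j + 1))"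
proof (induction j rule: less_induct)
  case (less j)
  define Dl where "Dl = (max 1 \<delta>0) ^ m"
  show ?case
  proof (cases "j = 0")
    case True
    define c0 where "c0 = (MB + (Emax + \<delta>0 + 1) * \<bar>C\<bar>) / C1"
    have "norm (pderivs (Yk \<delta> k) \<alpha> x) \<le> c0 * (\<eta> \<delta> / \<delta> ^ (j + 1))"
      if d: "\<delta> \<in> {0<..\<delta>0}" "length \<alpha> = j" for \<delta> k \<alpha> x
    proof -
      have d1: "0 < \<delta>" "\<delta> \<le> \<delta>0" using d by auto
      note f = alt_ii_facts[OF A d1]
      have \<alpha>: "\<alpha> = []" using d True by simp
      have u: "1 \<le> \<eta> \<delta> / \<delta>" using f(1) d1 by simp
      have "C1 * norm (Yk \<delta> k x) \<le> MB + (Emax + \<delta>0 + 1) * norm (RdPP D H0 E P \<delta> k x)"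
        by (rule Y0_bound[OF d1])
      also have "\<dots> \<le> MB * (\<eta> \<delta> / \<delta>) + (Emax + \<delta>0 + 1) * (\<bar>C\<bar> * (\<eta> \<delta> / \<delta>))"
      proof (rule add_mono)
        show "MB \<le> MB * (\<eta> \<delta> / \<delta>)" using mult_left_mono[OF u MB(1)] by simp
        show "(Emax + \<delta>0 + 1) * norm (RdPP D H0 E P \<delta> k x) \<le> (Emax + \<delta>0 + 1) * (\<bar>C\<bar> * (\<eta> \<delta> / \<delta>))"
          using f(2)[of k x] Emax0 d1 by (intro mult_left_mono) auto
      qed
      also have "\<dots> = C1 * (c0 * (\<eta> \<delta> / \<delta>))" using C1 d1 by (simp add: c0_def field_simps)
      finally show ?thesis unfolding mult_le_cancel_left_pos[OF C1] by (simp add: \<alpha> True)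
    qed
    then show ?thesis by blast
  next
    case False
    have "\<forall>i. \<exists>c. i < j \<longrightarrow> (\<forall>\<delta>\<in>{0<..\<delta>0}. \<forall>k \<alpha> x. length \<alpha> = i \<longrightarrow>
            norm (pderivs (Yk \<delta> k) \<alpha> x) \<le> c * (\<eta> \<delta> / \<delta> ^ (i + 1)))"
      using less by auto
    then obtain cf where cf: "\<And>i \<delta> k \<alpha> x. i < j \<Longrightarrow> \<delta> \<in> {0<..\<delta>0} \<Longrightarrow> length \<alpha> = i \<Longrightarrow>
            norm (pderivs (Yk \<delta> k) \<alpha> x) \<le> cf i * (\<eta> \<delta> / \<delta> ^ (i + 1))"
      by metis
    define cmax where "cmax = (\<Sum>i<j. \<bar>cf i\<bar>)"
    have cmax0: "0 \<le> cmax" unfolding cmax_def by (rule sum_nonneg) simp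
    have cfle: "\<bar>cf i\<bar> \<le> cmax" if "i < j" for i
      unfolding cmax_def by (rule member_le_sum) (use that in auto)
    define cj where "cj = qc \<delta>0 * Dl * (MB + 2 ^ j * MK * cmax)"
    have "norm (pderivs (Yk \<delta> k) \<alpha> x) \<le> cj * (\<eta> \<delta> / \<delta> ^ (j + 1))"
      if d: "\<delta> \<in> {0<..\<delta>0}" "length \<alpha> = j" for \<delta> k \<alpha> x
    proof -
      have d1: "0 < \<delta>" "\<delta> \<le> \<delta>0" using d by auto
      note f = alt_ii_facts[OF A d1]
      have eta0: "0 \<le> \<eta> \<delta>" using f(1) d1 by simp
      define Aa where "Aa = cmax * Dl * (\<eta> \<delta> / \<delta> ^ j)"
      have Aa0: "0 \<le> Aa" using cmax0 eta0 d1 by (simp add: Aa_def Dl_def)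
      have hyp: "norm (pderivs (Yk \<delta> k) c x) \<le> Aa" if bc: "(b, c) \<in> set (tl (splits \<alpha>))" for b c
      proof -
        have "b \<noteq> []" by (rule splits_tl[OF bc])
        moreover have "length b + length c = j"
          using splits_len[of b c \<alpha>] bc d(2) by (metis list.set_sel(2) splits_ne)
        ultimately have i: "length c < j" by (cases b) auto
        have "norm (pderivs (Yk \<delta> k) c x) \<le> cf (length c) * (\<eta> \<delta> / \<delta> ^ (length c + 1))"
          by (rule cf[OF i d(1) refl])
        also have "\<dots> \<le> \<bar>cf (length c)\<bar> * (\<eta> \<delta> / \<delta> ^ (length c + 1))"
          using eta0 d1 by (intro mult_right_mono) auto
        also have "\<dots> \<le> cmax * (Dl * (\<eta> \<delta> / \<delta> ^ j))"
          unfolding Dl_def using i less.prems d1 eta0 cmax0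
          by (intro mult_mono cfle AW1) auto
        finally show ?thesis by (simp add: Aa_def mult.assoc)
      qed
      have "norm (pderivs (Yk \<delta> k) \<alpha> x) \<le> norm (Qb \<delta> x) * (MB + 2 ^ j * MK * Aa)"
        by (rule norm_rec[OF d1(1) d(2) less.prems Aa0 hyp])
      also have "\<dots> \<le> (qc \<delta>0 / \<delta>) * (MB + 2 ^ j * MK * Aa)"
        using Qb_le[OF d1] MB(1) MK(1) Aa0 by (intro mult_right_mono) auto
      also have "\<dots> = qc \<delta>0 * MB * (1 / \<delta>) + qc \<delta>0 * 2 ^ j * MK * cmax * Dl * (\<eta> \<delta> / \<delta> ^ (j + 1))"
        using d1 by (simp add: Aa_def field_simps)
      also have "\<dots> \<le> qc \<delta>0 * MB * (Dl * (\<eta> \<delta> / \<delta> ^ (j + 1))) + qc \<delta>0 * 2 ^ j * MK * cmax * Dl * (\<eta> \<delta> / \<delta> ^ (j + 1))"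
      proof -
        have "1 / \<delta> ^ 1 \<le> Dl * (\<eta> \<delta> / \<delta> ^ (j + 1))"
          unfolding Dl_def using False less.prems d1 f(1) by (intro AW2) auto
        then show ?thesis using qc0[OF d1] MB(1) by (intro add_right_mono mult_left_mono) auto
      qed
      also have "\<dots> = cj * (\<eta> \<delta> / \<delta> ^ (j + 1))" using d1 by (simp add: cj_def field_simps)
      finally show ?thesis .
    qed
    then show ?thesis by blast
  qed
qed

lemma splits_single: "tl (splits [l]) = [([l], [])]" by simp

lemma Y1_bound:
  assumes d: "0 < \<delta>" "\<delta> \<le> \<delta>0" and m1: "1 \<le> m"
  shows "C1 * norm (pderivs (Yk \<delta> k) [l] x) \<le> (MB + MK * norm (Yk \<delta> k x))
           + (Emax + \<delta>0 + 1) * norm (partial (RdPP D H0 E P \<delta> k) l x)"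
proof -
  define W where "W = pderivs (Bk k) [l] x - (pderivs K0 [l] x o\<^sub>L Yk \<delta> k x)"
  have rec: "pderivs (Yk \<delta> k) [l] x = Qb \<delta> x o\<^sub>L W"
    using recursion[OF d(1), of "[l]" k x] m1 by (simp add: W_def)
  have dY: "Yk \<delta> k differentiable (at y)" for y
    using Cb_diff_pderivs[OF Yk_cb[OF d(1), of k], of "[]" y] m1 by simp
  have R: "RdPP D H0 E P \<delta> k = (\<lambda>y. Sb o\<^sub>L Yk \<delta> k y)" using RdPP_eq d by auto
  have SQW: "Sb o\<^sub>L (Qb \<delta> x o\<^sub>L W) = partial (RdPP D H0 E P \<delta> k) l x"
    unfolding R rec[symmetric]
    by (simp add: partial_linear[OF bounded_bilinear.bounded_linear_right[OF bounded_bilinear_blinfun_compose] dY])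
  have nW: "norm W \<le> MB + MK * norm (Yk \<delta> k x)"
  proof -
    have "norm W \<le> norm (pderivs (Bk k) [l] x) + norm (pderivs K0 [l] x o\<^sub>L Yk \<delta> k x)"
      unfolding W_def by (rule norm_triangle_ineq4)
    also have "\<dots> \<le> MB + MK * norm (Yk \<delta> k x)"
      using MB(2)[of "[l]" k x] MK(2)[of "[l]" x] m1
      by (intro add_mono order_trans[OF norm_blinfun_compose] mult_right_mono) auto
    finally show ?thesis .
  qed
  have "C1 * norm (pderivs (Yk \<delta> k) [l] x) \<le> norm W + (Emax + \<delta> + 1) * norm (Sb o\<^sub>L (Qb \<delta> x o\<^sub>L W))"
    unfolding rec by (rule Dtrick[OF d(1)])
  also have "\<dots> \<le> (MB + MK * norm (Yk \<delta> k x)) + (Emax + \<delta>0 + 1) * norm (partial (RdPP D H0 E P \<delta> k) l x)"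
    unfolding SQW using nW d by (intro add_mono mult_right_mono) auto
  finally show ?thesis .
qed

lemma alt_iii_facts:
  assumes A: "alt_iii D H0 E P \<delta>0 \<eta> C" and d: "0 < \<delta>" "\<delta> \<le> \<delta>0"
  shows "norm (partial (RdPP D H0 E P \<delta> k) l x) \<le> \<bar>C\<bar> * (\<eta> \<delta> / \<delta>)"
proof -
  have e: "\<delta> \<le> \<eta> \<delta>" using A d unfolding alt_iii_def alt_ii_def by auto
  have "norm (partial (RdPP D H0 E P \<delta> k) l x) \<le> C / \<delta> * \<eta> \<delta>" using A d unfolding alt_iii_def by auto
  also have "\<dots> \<le> \<bar>C\<bar> * (\<eta> \<delta> / \<delta>)" using d e by (simp add: field_simps mult_right_mono)
  finally show ?thesis .
qed

lemma iii_Y: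
  assumes A3: "alt_iii D H0 E P \<delta>0 \<eta> C"
  shows "j \<le> m \<Longrightarrow> \<exists>c. \<forall>\<delta>\<in>{0<..\<delta>0}. \<forall>k \<alpha> x. length \<alpha> = j \<longrightarrow>
            norm (pderivs (Yk \<delta> k) \<alpha> x) \<le> c * (\<eta> \<delta> / \<delta> ^ (max j 1))"
proof (induction j rule: less_induct)
  case (less j)
  have A: "alt_ii D H0 E P \<delta>0 \<eta> C" using A3 by (simp add: alt_iii_def)
  define Dl where "Dl = (max 1 \<delta>0) ^ m"
  consider "j = 0" | "j = 1" | "j \<ge> 2" by arith
  then show ?case
  proof cases
    case 1
    then show ?thesis using ii_Y[OF A less.prems] by simp
  next
    case 2
    obtain c0 where c0: "\<And>\<delta> k \<alpha> x. \<delta> \<in> {0<..\<delta>0} \<Longrightarrow> length \<alpha> = 0 \<Longrightarrow>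
        norm (pderivs (Yk \<delta> k) \<alpha> x) \<le> c0 * (\<eta> \<delta> / \<delta> ^ (0 + 1))"
      using ii_Y[OF A, of 0] by (metis le0)
    define c1 where "c1 = (MB + MK * \<bar>c0\<bar> + (Emax + \<delta>0 + 1) * \<bar>C\<bar>) / C1"
    have "norm (pderivs (Yk \<delta> k) \<alpha> x) \<le> c1 * (\<eta> \<delta> / \<delta> ^ (max j 1))"
      if d: "\<delta> \<in> {0<..\<delta>0}" "length \<alpha> = j" for \<delta> k \<alpha> x
    proof -
      have d1: "0 < \<delta>" "\<delta> \<le> \<delta>0" using d by auto
      note f = alt_ii_facts[OF A d1]
      obtain l where \<alpha>: "\<alpha> = [l]" using d(2) 2 by (cases \<alpha>) auto
      have u: "1 \<le> \<eta> \<delta> / \<delta>" using f(1) d1 by simp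
      have y0: "norm (Yk \<delta> k x) \<le> \<bar>c0\<bar> * (\<eta> \<delta> / \<delta>)"
      proof -
        have "norm (Yk \<delta> k x) \<le> c0 * (\<eta> \<delta> / \<delta>)" using c0[OF d(1), of "[]" k x] by simp
        also have "\<dots> \<le> \<bar>c0\<bar> * (\<eta> \<delta> / \<delta>)" using f(1) d1 by (intro mult_right_mono) auto
        finally show ?thesis .
      qed
      have "C1 * norm (pderivs (Yk \<delta> k) [l] x) \<le> (MB + MK * norm (Yk \<delta> k x))
           + (Emax + \<delta>0 + 1) * norm (partial (RdPP D H0 E P \<delta> k) l x)"
        using Y1_bound[OF d1] 2 less.prems by simp
      also have "\<dots> \<le> (MB * (\<eta> \<delta> / \<delta>) + MK * (\<bar>c0\<bar> * (\<eta> \<delta> / \<delta>)))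
           + (Emax + \<delta>0 + 1) * (\<bar>C\<bar> * (\<eta> \<delta> / \<delta>))"
      proof (intro add_mono)
        show "MB \<le> MB * (\<eta> \<delta> / \<delta>)" using mult_left_mono[OF u MB(1)] by simp
        show "MK * norm (Yk \<delta> k x) \<le> MK * (\<bar>c0\<bar> * (\<eta> \<delta> / \<delta>))" using y0 MK(1) by (rule mult_left_mono)
        show "(Emax + \<delta>0 + 1) * norm (partial (RdPP D H0 E P \<delta> k) l x) \<le> (Emax + \<delta>0 + 1) * (\<bar>C\<bar> * (\<eta> \<delta> / \<delta>))"
          using alt_iii_facts[OF A3 d1] Emax0 d1 by (intro mult_left_mono) auto
      qed
      also have "\<dots> = C1 * (c1 * (\<eta> \<delta> / \<delta> ^ (max j 1)))" using C1 d1 2 by (simp add: c1_def field_simps)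
      finally show ?thesis unfolding mult_le_cancel_left_pos[OF C1] by (simp add: \<alpha>)
    qed
    then show ?thesis by blast
  next
    case 3
    have "\<forall>i. \<exists>c. i < j \<longrightarrow> (\<forall>\<delta>\<in>{0<..\<delta>0}. \<forall>k \<alpha> x. length \<alpha> = i \<longrightarrow>
            norm (pderivs (Yk \<delta> k) \<alpha> x) \<le> c * (\<eta> \<delta> / \<delta> ^ (max i 1)))"
      using less by auto
    then obtain cf where cf: "\<And>i \<delta> k \<alpha> x. i < j \<Longrightarrow> \<delta> \<in> {0<..\<delta>0} \<Longrightarrow> length \<alpha> = i \<Longrightarrow>
            norm (pderivs (Yk \<delta> k) \<alpha> x) \<le> cf i * (\<eta> \<delta> / \<delta> ^ (max i 1))"
      by metis
    define cmax where "cmax = (\<Sum>i<j. \<bar>cf i\<bar>)"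
    have cmax0: "0 \<le> cmax" unfolding cmax_def by (rule sum_nonneg) simp
    have cfle: "\<bar>cf i\<bar> \<le> cmax" if "i < j" for i
      unfolding cmax_def by (rule member_le_sum) (use that in auto)
    define cj where "cj = qc \<delta>0 * Dl * (MB + 2 ^ j * MK * cmax)"
    have "norm (pderivs (Yk \<delta> k) \<alpha> x) \<le> cj * (\<eta> \<delta> / \<delta> ^ (max j 1))"
      if d: "\<delta> \<in> {0<..\<delta>0}" "length \<alpha> = j" for \<delta> k \<alpha> x
    proof -
      have d1: "0 < \<delta>" "\<delta> \<le> \<delta>0" using d by auto
      note f = alt_ii_facts[OF A d1]
      have eta0: "0 \<le> \<eta> \<delta>" using f(1) d1 by simp
      define Aa where "Aa = cmax * Dl * (\<eta> \<delta> / \<delta> ^ (j - 1))"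
      have Aa0: "0 \<le> Aa" using cmax0 eta0 d1 by (simp add: Aa_def Dl_def)
      have hyp: "norm (pderivs (Yk \<delta> k) c x) \<le> Aa" if bc: "(b, c) \<in> set (tl (splits \<alpha>))" for b c
      proof -
        have "b \<noteq> []" by (rule splits_tl[OF bc])
        moreover have "length b + length c = j"
          using splits_len[of b c \<alpha>] bc d(2) by (metis list.set_sel(2) splits_ne)
        ultimately have i: "length c < j" by (cases b) auto
        have "norm (pderivs (Yk \<delta> k) c x) \<le> cf (length c) * (\<eta> \<delta> / \<delta> ^ (max (length c) 1))"
          by (rule cf[OF i d(1) refl])
        also have "\<dots> \<le> \<bar>cf (length c)\<bar> * (\<eta> \<delta> / \<delta> ^ (max (length c) 1))"
          using eta0 d1 by (intro mult_right_mono) auto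
        also have "\<dots> \<le> cmax * (Dl * (\<eta> \<delta> / \<delta> ^ (j - 1)))"
          unfolding Dl_def using i less.prems d1 eta0 cmax0 3
          by (intro mult_mono cfle AW1) auto
        finally show ?thesis by (simp add: Aa_def mult.assoc)
      qed
      have "norm (pderivs (Yk \<delta> k) \<alpha> x) \<le> norm (Qb \<delta> x) * (MB + 2 ^ j * MK * Aa)"
        by (rule norm_rec[OF d1(1) d(2) less.prems Aa0 hyp])
      also have "\<dots> \<le> (qc \<delta>0 / \<delta>) * (MB + 2 ^ j * MK * Aa)"
        using Qb_le[OF d1] MB(1) MK(1) Aa0 by (intro mult_right_mono) auto
      also have "\<dots> = qc \<delta>0 * MB * (1 / \<delta> ^ 1) + qc \<delta>0 * 2 ^ j * MK * cmax * Dl * (\<eta> \<delta> / (\<delta> * \<delta> ^ (j - 1)))"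
        using d1 by (simp add: Aa_def field_simps)
      also have "\<delta> * \<delta> ^ (j - 1) = \<delta> ^ j" using 3 by (cases j) auto
      also have "qc \<delta>0 * MB * (1 / \<delta> ^ 1) \<le> qc \<delta>0 * MB * (Dl * (\<eta> \<delta> / \<delta> ^ j))"
      proof -
        have "1 / \<delta> ^ 1 \<le> Dl * (\<eta> \<delta> / \<delta> ^ j)"
          unfolding Dl_def using 3 less.prems d1 f(1) by (intro AW2) auto
        then show ?thesis using qc0[OF d1] MB(1) by (intro mult_left_mono) auto
      qed
      also have "qc \<delta>0 * MB * (Dl * (\<eta> \<delta> / \<delta> ^ j)) + qc \<delta>0 * 2 ^ j * MK * cmax * Dl * (\<eta> \<delta> / \<delta> ^ j)
                 = cj * (\<eta> \<delta> / \<delta> ^ (max j 1))" using d1 3 by (simp add: cj_def field_simps max_def)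
      finally show ?thesis by simp
    qed
    then show ?thesis by blast
  qed
qed

end


lemma sqrt_sum_sq_le: "(\<And>i. i \<in> A \<Longrightarrow> 0 \<le> f i) \<Longrightarrow> sqrt (\<Sum>i\<in>A. (f i)\<^sup>2) \<le> (\<Sum>i\<in>A. f i)"
  using L2_set_le_sum[of A f] unfolding L2_set_def by auto

lemma norm_cS: "norm (cS c X) \<le> cmod c * norm X"
  by (rule norm_blinfun_bound) (auto simp: cS_apply norm_scaleC mult.assoc intro!: mult_left_mono norm_blinfun)

context mset begin

lemma F_pderivs_nth:
  assumes d: "\<delta> > 0" and len: "length \<alpha> \<le> m"
  shows "pderivs (Fdelta D H0 E P \<delta>) \<alpha> x $ k = Sb o\<^sub>L pderivs (Yk \<delta> k) \<alpha> x"
proof -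
  have sF: "smooth (length \<alpha>) (Fdelta D H0 E P \<delta>)" by (rule smooth_mono[OF Cb_smooth[OF F_cb[OF d]] len])
  have sY: "smooth (length \<alpha>) (Yk \<delta> k)" by (rule smooth_mono[OF Cb_smooth[OF Yk_cb[OF d]] len])
  have "pderivs (\<lambda>x. Fdelta D H0 E P \<delta> x $ k) \<alpha> = (\<lambda>x. pderivs (Fdelta D H0 E P \<delta>) \<alpha> x $ k)"
    by (rule pderivs_linear[OF bounded_linear_vec_nth sF])
  moreover have "(\<lambda>x. Fdelta D H0 E P \<delta> x $ k) = (\<lambda>x. Sb o\<^sub>L Yk \<delta> k x)" using Fdelta_nth d by auto
  moreover have "pderivs (\<lambda>x. Sb o\<^sub>L Yk \<delta> k x) \<alpha> = (\<lambda>x. Sb o\<^sub>L pderivs (Yk \<delta> k) \<alpha> x)"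
    by (rule pderivs_linear[OF bounded_bilinear.bounded_linear_right[OF bounded_bilinear_blinfun_compose] sY])
  ultimately show ?thesis by metis
qed

lemma F_pderivs_norm:
  assumes d: "\<delta> > 0" and len: "length \<alpha> \<le> m"
  shows "norm (pderivs (Fdelta D H0 E P \<delta>) \<alpha> x) \<le> (\<Sum>k\<in>UNIV. norm (pderivs (Yk \<delta> k) \<alpha> x))"
proof -
  have "norm (pderivs (Fdelta D H0 E P \<delta>) \<alpha> x) \<le> (\<Sum>k\<in>UNIV. norm (pderivs (Fdelta D H0 E P \<delta>) \<alpha> x $ k))"
    by (rule norm_vec_le_sum)
  also have "\<dots> \<le> (\<Sum>k\<in>UNIV. norm (pderivs (Yk \<delta> k) \<alpha> x))"
  proof (rule sum_mono)
    fix k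
    have "norm (Sb o\<^sub>L pderivs (Yk \<delta> k) \<alpha> x) \<le> norm Sb * norm (pderivs (Yk \<delta> k) \<alpha> x)"
      by (rule norm_blinfun_compose)
    also have "\<dots> \<le> 1 * norm (pderivs (Yk \<delta> k) \<alpha> x)" by (intro mult_right_mono Sb_norm) simp
    finally show "norm (pderivs (Fdelta D H0 E P \<delta>) \<alpha> x $ k) \<le> norm (pderivs (Yk \<delta> k) \<alpha> x)"
      by (simp add: F_pderivs_nth[OF d len])
  qed
  finally show ?thesis .
qed

lemma F_apply: "\<delta> > 0 \<Longrightarrow> blinfun_apply (Fdelta D H0 E P \<delta> x $ k) \<psi> = Rz \<delta> x (blinfun_apply (Bk k x) \<psi>)"
  by (simp add: Fdelta_def Bk_eq RB_apply)

lemma RdPP_apply: "\<delta> > 0 \<Longrightarrow> blinfun_apply (RdPP D H0 E P \<delta> k x) \<psi> = Rz \<delta> x (blinfun_apply (Bk k x) \<psi>)"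
  by (simp add: RdPP_def Bk_def RB_apply)

lemma gnorm_F:
  assumes d: "0 < \<delta>" "\<delta> \<le> \<delta>0"
  shows "gnorm (H0 x) (blinfun_apply (Fdelta D H0 E P \<delta> x $ k) \<psi>) \<le>
           (MB + (Emax + \<delta>0 + 1) * norm (RdPP D H0 E P \<delta> k x)) * norm \<psi>"
proof -
  let ?w = "blinfun_apply (Bk k x) \<psi>"
  let ?z = "spec_pt E \<delta> x"
  have s: "H0 x (Rz \<delta> x ?w) = ?w + scaleC ?z (Rz \<delta> x ?w)" using Rz_spec[of \<delta> x ?w] d by (simp add: algebra_simps)
  have RR: "Rz \<delta> x ?w = blinfun_apply (RdPP D H0 E P \<delta> k x) \<psi>" using RdPP_apply d by simp
  have z: "cmod ?z + 1 \<le> Emax + \<delta>0 + 1" using spec_pt_norm[of E \<delta> x] Emax[of x] d by simp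
  have "gnorm (H0 x) (blinfun_apply (Fdelta D H0 E P \<delta> x $ k) \<psi>) = norm (?w + scaleC ?z (Rz \<delta> x ?w)) + norm (Rz \<delta> x ?w)"
    using d by (simp add: F_apply gnorm_def s)
  also have "\<dots> \<le> norm ?w + (cmod ?z + 1) * norm (Rz \<delta> x ?w)"
    using norm_triangle_ineq[of ?w "scaleC ?z (Rz \<delta> x ?w)"] by (simp add: norm_scaleC algebra_simps)
  also have "\<dots> \<le> MB * norm \<psi> + (Emax + \<delta>0 + 1) * (norm (RdPP D H0 E P \<delta> k x) * norm \<psi>)"
    unfolding RR using MB(2)[of "[]" k x] z Emax0 d
    by (intro add_mono mult_mono norm_blinfun order_trans[OF norm_blinfun] mult_right_mono) auto
  finally show ?thesis by (simp add: algebra_simps)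
qed

lemma F_inD: "\<delta> > 0 \<Longrightarrow> blinfun_apply (Fdelta D H0 E P \<delta> x $ k) \<psi> \<in> D"
  using Rz_spec by (simp add: F_apply)

lemma Ydelta_norm: "\<delta> > 0 \<Longrightarrow> norm (Ydelta D H0 E P \<delta> x) \<le> (\<Sum>k\<in>UNIV. \<delta> * norm (RdPP D H0 E P \<delta> k x))"
proof -
  assume d: "\<delta> > 0"
  have "norm (Ydelta D H0 E P \<delta> x) \<le> (\<Sum>k\<in>UNIV. norm (Ydelta D H0 E P \<delta> x $ k))" by (rule norm_vec_le_sum)
  also have "\<dots> \<le> (\<Sum>k\<in>UNIV. \<delta> * norm (RdPP D H0 E P \<delta> k x))"
  proof (rule sum_mono)
    fix k
    have "Ydelta D H0 E P \<delta> x $ k = cS (- \<i> * complex_of_real \<delta>) (RdPP D H0 E P \<delta> k x)"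
      by (simp add: Ydelta_def cS_def)
    also have "norm \<dots> \<le> cmod (- \<i> * complex_of_real \<delta>) * norm (RdPP D H0 E P \<delta> k x)" by (rule norm_cS)
    finally show "norm (Ydelta D H0 E P \<delta> x $ k) \<le> \<delta> * norm (RdPP D H0 E P \<delta> k x)"
      using d by (simp add: norm_mult)
  qed
  finally show ?thesis .
qed

end


lemma sum_le_card_const: "(\<And>k. f k \<le> c) \<Longrightarrow> (\<Sum>k\<in>(UNIV::'n::finite set). f k) \<le> real CARD('n) * c"
  using sum_mono[of UNIV f "\<lambda>_. c"] by simp

context mset begin

lemma main_ii:
  assumes A: "alt_ii D H0 E P \<delta>0 \<eta> C"
  shows "\<exists>C'. \<forall>\<delta>\<in>{0<..\<delta>0}. (\<forall>x. tuple_bound_D D (H0 x) (Fdelta D H0 E P \<delta> x) (C' / \<delta> * \<eta> \<delta>)) \<and>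
           (\<forall>j\<in>{1..m}. \<forall>\<alpha>. length \<alpha> = j \<longrightarrow> (\<forall>x. norm (pderivs (Fdelta D H0 E P \<delta>) \<alpha> x) \<le> C' / \<delta> ^ (j + 1) * \<eta> \<delta>)) \<and>
           (\<forall>x. norm (Ydelta D H0 E P \<delta> x) \<le> C' * \<eta> \<delta>)"
proof -
  have "\<forall>j. \<exists>c. j \<le> m \<longrightarrow> (\<forall>\<delta>\<in>{0<..\<delta>0}. \<forall>k \<alpha> x. length \<alpha> = j \<longrightarrow>
            norm (pderivs (Yk \<delta> k) \<alpha> x) \<le> c * (\<eta> \<delta> / \<delta> ^ (j + 1)))"
    using ii_Y[OF A] by blast
  then obtain cf where cf: "\<And>j \<delta> k \<alpha> x. j \<le> m \<Longrightarrow> \<delta> \<in> {0<..\<delta>0} \<Longrightarrow> length \<alpha> = j \<Longrightarrow>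
            norm (pderivs (Yk \<delta> k) \<alpha> x) \<le> cf j * (\<eta> \<delta> / \<delta> ^ (j + 1))" by metis
  define cY where "cY = (\<Sum>j\<le>m. \<bar>cf j\<bar>)"
  have cfle: "\<bar>cf j\<bar> \<le> cY" if "j \<le> m" for j
    unfolding cY_def by (rule member_le_sum) (use that in auto)
  have cY0: "0 \<le> cY" unfolding cY_def by (rule sum_nonneg) simp
  define N where "N = real CARD('n)"
  have N0: "0 \<le> N" by (simp add: N_def)
  define g where "g = MB + (Emax + \<delta>0 + 1) * \<bar>C\<bar>"
  have g0: "0 \<le> g" using MB(1) Emax0 A by (simp add: g_def alt_ii_def)
  define C' where "C' = N * cY + N * g + N * \<bar>C\<bar>"
  have le1: "N * cY \<le> C'" "N * g \<le> C'" "N * \<bar>C\<bar> \<le> C'"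
    using N0 cY0 g0 by (auto simp: C'_def)
  have "(\<forall>x. tuple_bound_D D (H0 x) (Fdelta D H0 E P \<delta> x) (C' / \<delta> * \<eta> \<delta>)) \<and>
           (\<forall>j\<in>{1..m}. \<forall>\<alpha>. length \<alpha> = j \<longrightarrow> (\<forall>x. norm (pderivs (Fdelta D H0 E P \<delta>) \<alpha> x) \<le> C' / \<delta> ^ (j + 1) * \<eta> \<delta>)) \<and>
           (\<forall>x. norm (Ydelta D H0 E P \<delta> x) \<le> C' * \<eta> \<delta>)" if d: "\<delta> \<in> {0<..\<delta>0}" for \<delta>
  proof (intro conjI allI ballI impI)
    have d1: "0 < \<delta>" "\<delta> \<le> \<delta>0" using d by auto
    note f = alt_ii_facts[OF A d1]
    have u: "1 \<le> \<eta> \<delta> / \<delta>" using f(1) d1 by simp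
    have eta0: "0 \<le> \<eta> \<delta>" using f(1) d1 by simp
    fix x
    show "tuple_bound_D D (H0 x) (Fdelta D H0 E P \<delta> x) (C' / \<delta> * \<eta> \<delta>)"
      unfolding tuple_bound_D_def
    proof (intro conjI allI)
      fix \<psi> k show "blinfun_apply (Fdelta D H0 E P \<delta> x $ k) \<psi> \<in> D" by (rule F_inD[OF d1(1)])
    next
      fix \<psi>
      have gk: "gnorm (H0 x) (blinfun_apply (Fdelta D H0 E P \<delta> x $ k) \<psi>) \<le> g * (\<eta> \<delta> / \<delta>) * norm \<psi>" for k
      proof -
        have "gnorm (H0 x) (blinfun_apply (Fdelta D H0 E P \<delta> x $ k) \<psi>) \<le>
           (MB + (Emax + \<delta>0 + 1) * norm (RdPP D H0 E P \<delta> k x)) * norm \<psi>" by (rule gnorm_F[OF d1])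
        also have "\<dots> \<le> (MB * (\<eta> \<delta> / \<delta>) + (Emax + \<delta>0 + 1) * (\<bar>C\<bar> * (\<eta> \<delta> / \<delta>))) * norm \<psi>"
        proof (intro mult_right_mono add_mono)
          show "MB \<le> MB * (\<eta> \<delta> / \<delta>)" using mult_left_mono[OF u MB(1)] by simp
          show "(Emax + \<delta>0 + 1) * norm (RdPP D H0 E P \<delta> k x) \<le> (Emax + \<delta>0 + 1) * (\<bar>C\<bar> * (\<eta> \<delta> / \<delta>))"
            using f(2)[of k x] Emax0 d1 by (intro mult_left_mono) auto
        qed simp
        also have "\<dots> = g * (\<eta> \<delta> / \<delta>) * norm \<psi>" using d1 by (simp add: g_def field_simps)
        finally show ?thesis .
      qed
      have "sqrt (\<Sum>k\<in>UNIV. (gnorm (H0 x) (blinfun_apply (Fdelta D H0 E P \<delta> x $ k) \<psi>))\<^sup>2)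
            \<le> (\<Sum>k\<in>UNIV. gnorm (H0 x) (blinfun_apply (Fdelta D H0 E P \<delta> x $ k) \<psi>))"
        by (rule sqrt_sum_sq_le) (simp add: gnorm_def)
      also have "\<dots> \<le> N * (g * (\<eta> \<delta> / \<delta>) * norm \<psi>)" unfolding N_def by (rule sum_le_card_const[OF gk])
      also have "\<dots> = (N * g) * ((\<eta> \<delta> / \<delta>) * norm \<psi>)" by (simp add: algebra_simps)
      also have "\<dots> \<le> C' * ((\<eta> \<delta> / \<delta>) * norm \<psi>)" using le1(2) eta0 d1 by (intro mult_right_mono) auto
      also have "\<dots> = C' / \<delta> * \<eta> \<delta> * norm \<psi>" by (simp add: field_simps)
      finally show "sqrt (\<Sum>j\<in>UNIV. (gnorm (H0 x) (blinfun_apply (Fdelta D H0 E P \<delta> x $ j) \<psi>))\<^sup>2)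
            \<le> C' / \<delta> * \<eta> \<delta> * norm \<psi>" .
    qed
    show "norm (Ydelta D H0 E P \<delta> x) \<le> C' * \<eta> \<delta>"
    proof -
      have "norm (Ydelta D H0 E P \<delta> x) \<le> (\<Sum>k\<in>UNIV. \<delta> * norm (RdPP D H0 E P \<delta> k x))" by (rule Ydelta_norm[OF d1(1)])
      also have "\<dots> \<le> N * (\<bar>C\<bar> * \<eta> \<delta>)" unfolding N_def
      proof (rule sum_le_card_const)
        fix k
        have "\<delta> * norm (RdPP D H0 E P \<delta> k x) \<le> \<delta> * (\<bar>C\<bar> * (\<eta> \<delta> / \<delta>))" using f(2) d1 by (intro mult_left_mono) auto
        then show "\<delta> * norm (RdPP D H0 E P \<delta> k x) \<le> \<bar>C\<bar> * \<eta> \<delta>" using d1 by simp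
      qed
      also have "\<dots> \<le> C' * \<eta> \<delta>" using le1(3) eta0 by (simp add: mult.assoc[symmetric] mult_right_mono)
      finally show ?thesis .
    qed
  next
    have d1: "0 < \<delta>" "\<delta> \<le> \<delta>0" using d by auto
    note f = alt_ii_facts[OF A d1]
    have eta0: "0 \<le> \<eta> \<delta>" using f(1) d1 by simp
    fix j :: nat and \<alpha> :: "'n list" and x :: "real^'n" assume j: "j \<in> {1..m}" and len: "length \<alpha> = j"
    have "norm (pderivs (Fdelta D H0 E P \<delta>) \<alpha> x) \<le> (\<Sum>k\<in>UNIV. norm (pderivs (Yk \<delta> k) \<alpha> x))"
      using j len by (intro F_pderivs_norm[OF d1(1)]) auto
    also have "\<dots> \<le> N * (cY * (\<eta> \<delta> / \<delta> ^ (j + 1)))" unfolding N_def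
    proof (rule sum_le_card_const)
      fix k
      have "norm (pderivs (Yk \<delta> k) \<alpha> x) \<le> cf j * (\<eta> \<delta> / \<delta> ^ (j + 1))" using cf[of j \<delta> \<alpha> k x] j len d by auto
      also have "\<dots> \<le> cY * (\<eta> \<delta> / \<delta> ^ (j + 1))"
        using cfle[of j] j eta0 d1 by (intro mult_right_mono) auto
      finally show "norm (pderivs (Yk \<delta> k) \<alpha> x) \<le> cY * (\<eta> \<delta> / \<delta> ^ (j + 1))" .
    qed
    also have "\<dots> = (N * cY) * (\<eta> \<delta> / \<delta> ^ (j + 1))" by (simp only: mult.assoc)
    also have "\<dots> \<le> C' * (\<eta> \<delta> / \<delta> ^ (j + 1))"
      using le1(1) eta0 d1 by (intro mult_right_mono) auto
    also have "\<dots> = C' / \<delta> ^ (j + 1) * \<eta> \<delta>" by simp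
    finally show "norm (pderivs (Fdelta D H0 E P \<delta>) \<alpha> x) \<le> C' / \<delta> ^ (j + 1) * \<eta> \<delta>" .
  qed
  then show ?thesis by blast
qed

lemma main_iii:
  assumes A3: "alt_iii D H0 E P \<delta>0 \<eta> C"
  shows "\<exists>C'. \<forall>\<delta>\<in>{0<..\<delta>0}. \<forall>j\<in>{1..m}. \<forall>\<alpha>. length \<alpha> = j \<longrightarrow>
              (\<forall>x. norm (pderivs (Fdelta D H0 E P \<delta>) \<alpha> x) \<le> C' / \<delta> ^ j * \<eta> \<delta>)"
proof -
  have A: "alt_ii D H0 E P \<delta>0 \<eta> C" using A3 by (simp add: alt_iii_def)
  have "\<forall>j. \<exists>c. j \<le> m \<longrightarrow> (\<forall>\<delta>\<in>{0<..\<delta>0}. \<forall>k \<alpha> x. length \<alpha> = j \<longrightarrow>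
            norm (pderivs (Yk \<delta> k) \<alpha> x) \<le> c * (\<eta> \<delta> / \<delta> ^ (max j 1)))"
    using iii_Y[OF A3] by blast
  then obtain cf where cf: "\<And>j \<delta> k \<alpha> x. j \<le> m \<Longrightarrow> \<delta> \<in> {0<..\<delta>0} \<Longrightarrow> length \<alpha> = j \<Longrightarrow>
            norm (pderivs (Yk \<delta> k) \<alpha> x) \<le> cf j * (\<eta> \<delta> / \<delta> ^ (max j 1))" by metis
  define cY where "cY = (\<Sum>j\<le>m. \<bar>cf j\<bar>)"
  have cfle: "\<bar>cf j\<bar> \<le> cY" if "j \<le> m" for j
    unfolding cY_def by (rule member_le_sum) (use that in auto)
  have cY0: "0 \<le> cY" unfolding cY_def by (rule sum_nonneg) simp
  define N where "N = real CARD('n)"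
  have N0: "0 \<le> N" by (simp add: N_def)
  have "norm (pderivs (Fdelta D H0 E P \<delta>) \<alpha> x) \<le> (N * cY) / \<delta> ^ j * \<eta> \<delta>"
    if d: "\<delta> \<in> {0<..\<delta>0}" and j: "j \<in> {1..m}" and len: "length \<alpha> = j" for \<delta> j \<alpha> x
  proof -
    have d1: "0 < \<delta>" "\<delta> \<le> \<delta>0" using d by auto
    note f = alt_ii_facts[OF A d1]
    have eta0: "0 \<le> \<eta> \<delta>" using f(1) d1 by simp
    have mj: "max j 1 = j" using j by simp
    have "norm (pderivs (Fdelta D H0 E P \<delta>) \<alpha> x) \<le> (\<Sum>k\<in>UNIV. norm (pderivs (Yk \<delta> k) \<alpha> x))"
      using j len by (intro F_pderivs_norm[OF d1(1)]) auto
    also have "\<dots> \<le> N * (cY * (\<eta> \<delta> / \<delta> ^ j))" unfolding N_def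
    proof (rule sum_le_card_const)
      fix k
      have "norm (pderivs (Yk \<delta> k) \<alpha> x) \<le> cf j * (\<eta> \<delta> / \<delta> ^ j)" using cf[of j \<delta> \<alpha> k x] j len d mj by auto
      also have "\<dots> \<le> cY * (\<eta> \<delta> / \<delta> ^ j)"
        using cfle[of j] j eta0 d1 by (intro mult_right_mono) auto
      finally show "norm (pderivs (Yk \<delta> k) \<alpha> x) \<le> cY * (\<eta> \<delta> / \<delta> ^ j)" .
    qed
    also have "\<dots> = (N * cY) / \<delta> ^ j * \<eta> \<delta>" by simp
    finally show ?thesis .
  qed
  then show ?thesis by blast
qed

lemma alt_ii_triv: "alt_ii D H0 E P 1 (\<lambda>_. 1) MB"
  unfolding alt_ii_def using RdPP_triv by auto

lemma main_i:
  assumes A: "alt_i D H0 E P"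
  shows "\<exists>\<delta>0>0. \<exists>C'. \<forall>\<delta>\<in>{0<..\<delta>0}.
           (\<forall>x. tuple_bound_D D (H0 x) (Fdelta D H0 E P \<delta> x) (C' / \<delta>)) \<and>
           (\<forall>j\<in>{1..m}. \<forall>\<alpha>. length \<alpha> = j \<longrightarrow>
              (\<forall>x. norm (pderivs (Fdelta D H0 E P \<delta>) \<alpha> x) \<le> C' / \<delta> ^ (j + 1)))"
    and "\<forall>\<epsilon>>0. \<exists>d>0. \<forall>\<delta>. 0 < \<delta> \<and> \<delta> < d \<longrightarrow> (\<forall>x. norm (Ydelta D H0 E P \<delta> x) \<le> \<epsilon>)"
proof -
  obtain C' where "\<forall>\<delta>\<in>{0<..1}. (\<forall>x. tuple_bound_D D (H0 x) (Fdelta D H0 E P \<delta> x) (C' / \<delta> * 1)) \<and>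
           (\<forall>j\<in>{1..m}. \<forall>\<alpha>. length \<alpha> = j \<longrightarrow> (\<forall>x. norm (pderivs (Fdelta D H0 E P \<delta>) \<alpha> x) \<le> C' / \<delta> ^ (j + 1) * 1))"
    using main_ii[OF alt_ii_triv] by fastforce
  then show "\<exists>\<delta>0>0. \<exists>C'. \<forall>\<delta>\<in>{0<..\<delta>0}.
           (\<forall>x. tuple_bound_D D (H0 x) (Fdelta D H0 E P \<delta> x) (C' / \<delta>)) \<and>
           (\<forall>j\<in>{1..m}. \<forall>\<alpha>. length \<alpha> = j \<longrightarrow>
              (\<forall>x. norm (pderivs (Fdelta D H0 E P \<delta>) \<alpha> x) \<le> C' / \<delta> ^ (j + 1)))"
    by (intro exI[of _ "1::real"]) auto
next
  show "\<forall>\<epsilon>>0. \<exists>d>0. \<forall>\<delta>. 0 < \<delta> \<and> \<delta> < d \<longrightarrow> (\<forall>x. norm (Ydelta D H0 E P \<delta> x) \<le> \<epsilon>)"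
  proof (intro allI impI)
    fix \<epsilon> :: real assume e: "\<epsilon> > 0"
    define N where "N = real CARD('n)"
    have N: "N > 0" by (simp add: N_def)
    have "\<forall>k. \<exists>d>0. \<forall>\<delta>. 0 < \<delta> \<and> \<delta> < d \<longrightarrow> (\<forall>x. \<delta> * norm (RdPP D H0 E P \<delta> k x) \<le> \<epsilon> / N)"
      using A e N unfolding alt_i_def by simp
    then obtain df where df: "\<And>k. df k > 0"
      "\<And>k \<delta> x. 0 < \<delta> \<Longrightarrow> \<delta> < df k \<Longrightarrow> \<delta> * norm (RdPP D H0 E P \<delta> k x) \<le> \<epsilon> / N" by metis
    define d where "d = Min (range df)"
    have d: "d > 0" using df(1) by (simp add: d_def)
    have dle: "d \<le> df k" for k unfolding d_def by (rule Min_le) auto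
    have "norm (Ydelta D H0 E P \<delta> x) \<le> \<epsilon>" if "0 < \<delta>" "\<delta> < d" for \<delta> x
    proof -
      have "norm (Ydelta D H0 E P \<delta> x) \<le> (\<Sum>k\<in>UNIV. \<delta> * norm (RdPP D H0 E P \<delta> k x))"
        by (rule Ydelta_norm[OF that(1)])
      also have "\<dots> \<le> N * (\<epsilon> / N)"
      proof -
        have "\<delta> * norm (RdPP D H0 E P \<delta> k x) \<le> \<epsilon> / N" for k
          using df(2)[of \<delta> k x] dle[of k] that by linarith
        from sum_le_card_const[of "\<lambda>k. \<delta> * norm (RdPP D H0 E P \<delta> k x)", OF this] show ?thesis
          by (simp add: N_def)
      qed
      also have "\<dots> = \<epsilon>" using N by simp
      finally show ?thesis .
    qed
    then show "\<exists>d>0. \<forall>\<delta>. 0 < \<delta> \<and> \<delta> < d \<longrightarrow> (\<forall>x. norm (Ydelta D H0 E P \<delta> x) \<le> \<epsilon>)" using d by blast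
  qed
qed

end


lemma orth_proj_idem: "orth_proj Q \<Longrightarrow> Q o\<^sub>L Q = Q"
  unfolding orth_proj_def by (intro blinfun_eqI) simp

theorem mainTheorem3:
  fixes D :: "'h::chilbert_space set"
    and H0 :: "real^'n \<Rightarrow> 'h \<Rightarrow> 'h"
    and P :: "real^'n \<Rightarrow> ('h \<Rightarrow>\<^sub>L 'h)"
    and E :: "real^'n \<Rightarrow> real"
    and x0 :: "real^'n" and C1 C2 :: real and m :: nat
  assumes separable: "\<exists>S::'h set. countable S \<and> closure S = UNIV"
    and sa: "\<forall>x. selfadjoint_on D (H0 x)"
    and C1: "C1 > 0"
    and normeq: "\<forall>x. \<forall>\<psi>\<in>D. C1 * gnorm (H0 x0) \<psi> \<le> gnorm (H0 x) \<psi> \<and> gnorm (H0 x) \<psi> \<le> C2 * gnorm (H0 x0) \<psi>"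
    and m: "m \<ge> 2"
    and H0reg: "CbD m D H0 x0"
    and Pproj: "\<forall>x. orth_proj (P x)"
    and eig: "\<forall>x \<phi>. blinfun_apply (P x) \<phi> \<in> D \<and>
                 H0 x (blinfun_apply (P x) \<phi>) = scaleC (complex_of_real (E x)) (blinfun_apply (P x) \<phi>)"
    and Preg: "Cb (Suc m) P"
    and Ereg: "Cb m E"
    and alt: "alt_i D H0 E P \<or> (\<exists>\<delta>0 \<eta> C. alt_ii D H0 E P \<delta>0 \<eta> C) \<or> (\<exists>\<delta>0 \<eta> C. alt_iii D H0 E P \<delta>0 \<eta> C)"
  shows
    "(\<forall>\<delta>>0. Cb m (Fdelta D H0 E P \<delta>)) \<and>
     (\<forall>\<delta>0 \<eta> C. alt_ii D H0 E P \<delta>0 \<eta> C \<or> alt_iii D H0 E P \<delta>0 \<eta> C \<longrightarrow>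
        (\<exists>C'. \<forall>\<delta>\<in>{0<..\<delta>0}.
           (\<forall>x. tuple_bound_D D (H0 x) (Fdelta D H0 E P \<delta> x) (C' / \<delta> * \<eta> \<delta>)) \<and>
           (\<forall>j\<in>{1..m}. \<forall>\<alpha>. length \<alpha> = j \<longrightarrow>
              (\<forall>x. norm (pderivs (Fdelta D H0 E P \<delta>) \<alpha> x) \<le> C' / \<delta> ^ (j + 1) * \<eta> \<delta>)) \<and>
           (\<forall>x. norm (Ydelta D H0 E P \<delta> x) \<le> C' * \<eta> \<delta>))) \<and>
     (alt_i D H0 E P \<longrightarrow>
        (\<exists>\<delta>0>0. \<exists>C'. \<forall>\<delta>\<in>{0<..\<delta>0}.
           (\<forall>x. tuple_bound_D D (H0 x) (Fdelta D H0 E P \<delta> x) (C' / \<delta>)) \<and>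
           (\<forall>j\<in>{1..m}. \<forall>\<alpha>. length \<alpha> = j \<longrightarrow>
              (\<forall>x. norm (pderivs (Fdelta D H0 E P \<delta>) \<alpha> x) \<le> C' / \<delta> ^ (j + 1)))) \<and>
        (\<forall>\<epsilon>>0. \<exists>d>0. \<forall>\<delta>. 0 < \<delta> \<and> \<delta> < d \<longrightarrow> (\<forall>x. norm (Ydelta D H0 E P \<delta> x) \<le> \<epsilon>))) \<and>
     (\<forall>\<delta>0 \<eta> C. alt_iii D H0 E P \<delta>0 \<eta> C \<longrightarrow>
        (\<exists>C'. \<forall>\<delta>\<in>{0<..\<delta>0}. \<forall>j\<in>{1..m}. \<forall>\<alpha>. length \<alpha> = j \<longrightarrow>
              (\<forall>x. norm (pderivs (Fdelta D H0 E P \<delta>) \<alpha> x) \<le> C' / \<delta> ^ j * \<eta> \<delta>)))"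
proof -
  obtain G :: "real^'n \<Rightarrow> ('h \<Rightarrow>\<^sub>L 'h)" where Gcb: "Cb m G"
    and Grel: "\<forall>x. \<forall>\<psi>\<in>D. blinfun_apply (G x) (H0 x0 \<psi> - scaleC \<i> \<psi>) = H0 x \<psi>"
    using H0reg unfolding CbD_def by blast
  have Pidem: "\<forall>x. P x o\<^sub>L P x = P x" using Pproj orth_proj_idem by blast
  have normeq': "\<forall>x. \<forall>\<psi>\<in>D. C1 * gnorm (H0 x0) \<psi> \<le> gnorm (H0 x) \<psi>" using normeq by blast
  interpret mset D H0 E x0 C1 G P m
    by unfold_locales (fact sa C1 normeq' Grel Gcb Pidem Preg Ereg)+
  show ?thesis
  proof (intro conjI)
    show "\<forall>\<delta>>0. Cb m (Fdelta D H0 E P \<delta>)" using F_cb by blast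
  next
    show "\<forall>\<delta>0 \<eta> C. alt_ii D H0 E P \<delta>0 \<eta> C \<or> alt_iii D H0 E P \<delta>0 \<eta> C \<longrightarrow>
        (\<exists>C'. \<forall>\<delta>\<in>{0<..\<delta>0}.
           (\<forall>x. tuple_bound_D D (H0 x) (Fdelta D H0 E P \<delta> x) (C' / \<delta> * \<eta> \<delta>)) \<and>
           (\<forall>j\<in>{1..m}. \<forall>\<alpha>. length \<alpha> = j \<longrightarrow>
              (\<forall>x. norm (pderivs (Fdelta D H0 E P \<delta>) \<alpha> x) \<le> C' / \<delta> ^ (j + 1) * \<eta> \<delta>)) \<and>
           (\<forall>x. norm (Ydelta D H0 E P \<delta> x) \<le> C' * \<eta> \<delta>))"
    proof (intro allI impI)
      fix \<delta>0 \<eta> C assume "alt_ii D H0 E P \<delta>0 \<eta> C \<or> alt_iii D H0 E P \<delta>0 \<eta> C"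
      then have "alt_ii D H0 E P \<delta>0 \<eta> C" by (auto simp: alt_iii_def)
      then show "\<exists>C'. \<forall>\<delta>\<in>{0<..\<delta>0}.
           (\<forall>x. tuple_bound_D D (H0 x) (Fdelta D H0 E P \<delta> x) (C' / \<delta> * \<eta> \<delta>)) \<and>
           (\<forall>j\<in>{1..m}. \<forall>\<alpha>. length \<alpha> = j \<longrightarrow>
              (\<forall>x. norm (pderivs (Fdelta D H0 E P \<delta>) \<alpha> x) \<le> C' / \<delta> ^ (j + 1) * \<eta> \<delta>)) \<and>
           (\<forall>x. norm (Ydelta D H0 E P \<delta> x) \<le> C' * \<eta> \<delta>)" by (rule main_ii)
    qed
  next
    show "alt_i D H0 E P \<longrightarrow>
        (\<exists>\<delta>0>0. \<exists>C'. \<forall>\<delta>\<in>{0<..\<delta>0}.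
           (\<forall>x. tuple_bound_D D (H0 x) (Fdelta D H0 E P \<delta> x) (C' / \<delta>)) \<and>
           (\<forall>j\<in>{1..m}. \<forall>\<alpha>. length \<alpha> = j \<longrightarrow>
              (\<forall>x. norm (pderivs (Fdelta D H0 E P \<delta>) \<alpha> x) \<le> C' / \<delta> ^ (j + 1)))) \<and>
        (\<forall>\<epsilon>>0. \<exists>d>0. \<forall>\<delta>. 0 < \<delta> \<and> \<delta> < d \<longrightarrow> (\<forall>x. norm (Ydelta D H0 E P \<delta> x) \<le> \<epsilon>))"
      using main_i by blast
  next
    show "\<forall>\<delta>0 \<eta> C. alt_iii D H0 E P \<delta>0 \<eta> C \<longrightarrow>
        (\<exists>C'. \<forall>\<delta>\<in>{0<..\<delta>0}. \<forall>j\<in>{1..m}. \<forall>\<alpha>. length \<alpha> = j \<longrightarrow>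
              (\<forall>x. norm (pderivs (Fdelta D H0 E P \<delta>) \<alpha> x) \<le> C' / \<delta> ^ j * \<eta> \<delta>))"
      using main_iii by blast
  qed
qed

end
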